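(* Let $G$ be a simple stochastic game, $A$ a set of arcs of $G$, and $\sigma,\sigma'$ two positional MAX strategies such that $\sigma' \succ_{G[A,\sigma]} \sigma$. Then $Z(\sigma')\subseteq Z(\sigma)$, where absorbing sets are taken in $G$.
   Context: A simple stochastic game (SSG) $G$ is a finite directed graph whose vertex set $V$ is partitioned into MAX vertices, MIN vertices, random vertices and a nonempty set $V_S$ of sinks; every non-sink vertex has at least one outgoing arc, every sink has exactly one outgoing arc, a self-loop; each random vertex $x$ carries a rational probability distribution $p_x$ on its out-neighbourhood, positive on every out-neighbour; each sink $s$ has rational value $\mathrm{Val}(s)\in[0,1]$. A positional MAX (resp. MIN) strategy assigns to each MAX (resp. MIN) vertex one of its out-neighbours. Under $\sigma,\tau$ from start $x_0$, the random play moves from MAX vertex $x$ to $\sigma(x)$, from MIN vertex $x$ to $\tau(x)$, from random vertex $x$ to an out-neighbour drawn by $p_x$ independently, and stays at a sink once reached; its value is $\mathrm{Val}(s)$ if it reaches sink $s$, else $0$, and $v^G_{\sigma,\tau}(x_0)$ is its expectation. $v^G_\sigma:=v^G_{\sigma,\tau}$ for a best response $\tau$, i.e. a MIN strategy with $v_{\sigma,\tau}\le v_{\sigma,\tau'}$ pointwise for all MIN strategies $\tau'$ (a positional one exists). Vectors are compared pointwise; $v>v'$ means $v\ge v'$ and $v\ne v'$. We write $\sigma'\succ_H\sigma$ (in a game $H$) if $v^H_{\sigma'}>v^H_\sigma$ and, for every MAX vertex $x$ with $v^H_{\sigma'}(x)=v^H_\sigma(x)$, $\sigma'(x)=\sigma(x)$.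 Transformed game: $G[A,\sigma]$ is obtained from a copy of $G$ by replacing each arc $e=(x,y)\in A$ by an arc $(x,s_e)$ to a new sink $s_e$ of value $v^G_\sigma(y)$ (for random $x$, $p_x(s_e)=p_x(y)$); $y$ is kept. Strategies of $G$ and $G[A,\sigma]$ are identified, and value vectors of $G[A,\sigma]$ are compared only on vertices of $G$. Absorbing sets: an absorbing set for $(\sigma,\tau)$ is a set $Z\subseteq V\setminus V_S$ such that from any vertex of $Z$, playing $(\sigma,\tau)$, the probability of reaching $V\setminus Z$ is zero; $Z(\sigma,\tau)$ is the union of all absorbing sets for $(\sigma,\tau)$; and $Z(\sigma)$ is the inclusion-wise largest of the sets $Z(\sigma,\tau)$ over positional MIN strategies $\tau$ (it exists and equals $Z(\sigma,\tau)$ for some positional best response $\tau$ to $\sigma$). *)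

theory Defs
  imports Complex_Main
begin

datatype vkind = MaxV | MinV | RandV | SinkV

record 'v game =
  verts :: "'v set"
  arcs  :: "('v \<times> 'v) set"
  kind  :: "'v \<Rightarrow> vkind"
  prob  :: "'v \<Rightarrow> 'v \<Rightarrow> real"
  sval  :: "'v \<Rightarrow> real"

definition sinks :: "('v, 'b) game_scheme \<Rightarrow> 'v set" where
  "sinks G = {x \<in> verts G. kind G x = SinkV}"

definition outn :: "('v, 'b) game_scheme \<Rightarrow> 'v \<Rightarrow> 'v set" where
  "outn G x = {y. (x, y) \<in> arcs G}"

definition ssg :: "'v game \<Rightarrow> bool" where
  "ssg G \<longleftrightarrow> finite (verts G) \<and> arcs G \<subseteq> verts G \<times> verts G \<and> sinks G \<noteq> {} \<and>
     (\<forall>x\<in>verts G. kind G x \<noteq> SinkV \<longrightarrow> outn G x \<noteq> {}) \<and>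
     (\<forall>s\<in>sinks G. outn G s = {s}) \<and>
     (\<forall>x\<in>verts G. kind G x = RandV \<longrightarrow>
        (\<forall>y\<in>outn G x. 0 < prob G x y \<and> prob G x y \<in> \<rat>) \<and> (\<Sum>y\<in>outn G x. prob G x y) = 1) \<and>
     (\<forall>s\<in>sinks G. sval G s \<in> \<rat> \<and> 0 \<le> sval G s \<and> sval G s \<le> 1)"

definition max_strategy :: "'v game \<Rightarrow> ('v \<Rightarrow> 'v) \<Rightarrow> bool" where
  "max_strategy G \<sigma> \<longleftrightarrow> (\<forall>x\<in>verts G. kind G x = MaxV \<longrightarrow> (x, \<sigma> x) \<in> arcs G)"

definition min_strategy :: "'v game \<Rightarrow> ('v \<Rightarrow> 'v) \<Rightarrow> bool" where
  "min_strategy G \<tau> \<longleftrightarrow> (\<forall>x\<in>verts G. kind G x = MinV \<longrightarrow> (x, \<tau> x) \<in> arcs G)"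

definition trans :: "'v game \<Rightarrow> ('v \<Rightarrow> 'v) \<Rightarrow> ('v \<Rightarrow> 'v) \<Rightarrow> 'v \<Rightarrow> 'v \<Rightarrow> real" where
  "trans G \<sigma> \<tau> x y = (case kind G x of
      MaxV \<Rightarrow> (if y = \<sigma> x then 1 else 0)
    | MinV \<Rightarrow> (if y = \<tau> x then 1 else 0)
    | RandV \<Rightarrow> (if (x, y) \<in> arcs G then prob G x y else 0)
    | SinkV \<Rightarrow> (if y = x then 1 else 0))"

fun nstep :: "'v game \<Rightarrow> ('v \<Rightarrow> 'v) \<Rightarrow> ('v \<Rightarrow> 'v) \<Rightarrow> nat \<Rightarrow> 'v \<Rightarrow> 'v \<Rightarrow> real" where
  "nstep G \<sigma> \<tau> 0 x y = (if x = y then 1 else 0)"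
| "nstep G \<sigma> \<tau> (Suc n) x y = (\<Sum>z\<in>verts G. trans G \<sigma> \<tau> x z * nstep G \<sigma> \<tau> n z y)"

text \<open>Since sinks are absorbing, the probability of reaching sink s is the limit of the
  probability of being at s after n steps; the value is \<open>\<Sum>\<^sub>s Val(s) P(reach s)\<close>.\<close>

definition play_value :: "'v game \<Rightarrow> ('v \<Rightarrow> 'v) \<Rightarrow> ('v \<Rightarrow> 'v) \<Rightarrow> 'v \<Rightarrow> real" where
  "play_value G \<sigma> \<tau> x = lim (\<lambda>n. \<Sum>s\<in>sinks G. sval G s * nstep G \<sigma> \<tau> n x s)"

definition best_response :: "'v game \<Rightarrow> ('v \<Rightarrow> 'v) \<Rightarrow> ('v \<Rightarrow> 'v) \<Rightarrow> bool" where
  "best_response G \<sigma> \<tau> \<longleftrightarrow> min_strategy G \<tau> \<and>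
     (\<forall>\<tau>'. min_strategy G \<tau>' \<longrightarrow> (\<forall>x\<in>verts G. play_value G \<sigma> \<tau> x \<le> play_value G \<sigma> \<tau>' x))"

definition val_max :: "'v game \<Rightarrow> ('v \<Rightarrow> 'v) \<Rightarrow> 'v \<Rightarrow> real" where
  "val_max G \<sigma> x = play_value G \<sigma> (SOME \<tau>. best_response G \<sigma> \<tau>) x"

definition improves :: "'v game \<Rightarrow> 'v set \<Rightarrow> ('v \<Rightarrow> 'v) \<Rightarrow> ('v \<Rightarrow> 'v) \<Rightarrow> bool" where
  "improves H S \<sigma>' \<sigma> \<longleftrightarrow>
     (\<forall>x\<in>S. val_max H \<sigma> x \<le> val_max H \<sigma>' x) \<and>
     (\<exists>x\<in>S. val_max H \<sigma>' x \<noteq> val_max H \<sigma> x) \<and>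
     (\<forall>x\<in>S. kind H x = MaxV \<longrightarrow> val_max H \<sigma>' x = val_max H \<sigma> x \<longrightarrow> \<sigma>' x = \<sigma> x)"

text \<open>Vertices of G are Inl x; the new sink s_e for e \<in> A is Inr e.\<close>

definition transform :: "'v game \<Rightarrow> ('v \<times> 'v) set \<Rightarrow> ('v \<Rightarrow> 'v) \<Rightarrow> ('v + ('v \<times> 'v)) game" where
  "transform G A \<sigma> = \<lparr>
     verts = Inl ` verts G \<union> Inr ` A,
     arcs = {(Inl x, Inl y) | x y. (x, y) \<in> arcs G - A}
          \<union> {(Inl (fst e), Inr e) | e. e \<in> A}
          \<union> {(Inr e, Inr e) | e. e \<in> A},
     kind = (\<lambda>u. case u of Inl x \<Rightarrow> kind G x | Inr e \<Rightarrow> SinkV),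
     prob = (\<lambda>u w. case (u, w) of
               (Inl x, Inl y) \<Rightarrow> prob G x y
             | (Inl x, Inr e) \<Rightarrow> (if fst e = x then prob G x (snd e) else 0)
             | _ \<Rightarrow> 0),
     sval = (\<lambda>u. case u of Inl x \<Rightarrow> sval G x | Inr e \<Rightarrow> val_max G \<sigma> (snd e)) \<rparr>"

text \<open>Identification of a strategy of G with a strategy of G[A,\<sigma>]: choosing y with
  (x,y) \<in> A corresponds to choosing the new sink s_(x,y).\<close>

definition lift_strategy :: "('v \<times> 'v) set \<Rightarrow> ('v \<Rightarrow> 'v) \<Rightarrow> ('v + ('v \<times> 'v)) \<Rightarrow> ('v + ('v \<times> 'v))" where
  "lift_strategy A \<sigma> u = (case u of
      Inl x \<Rightarrow> (if (x, \<sigma> x) \<in> A then Inr (x, \<sigma> x) else Inl (\<sigma> x))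
    | Inr e \<Rightarrow> Inr e)"

fun hit :: "'v game \<Rightarrow> ('v \<Rightarrow> 'v) \<Rightarrow> ('v \<Rightarrow> 'v) \<Rightarrow> 'v set \<Rightarrow> nat \<Rightarrow> 'v \<Rightarrow> real" where
  "hit G \<sigma> \<tau> T 0 x = (if x \<in> T then 1 else 0)"
| "hit G \<sigma> \<tau> T (Suc n) x = (if x \<in> T then 1 else (\<Sum>y\<in>verts G. trans G \<sigma> \<tau> x y * hit G \<sigma> \<tau> T n y))"

definition reach_prob :: "'v game \<Rightarrow> ('v \<Rightarrow> 'v) \<Rightarrow> ('v \<Rightarrow> 'v) \<Rightarrow> 'v set \<Rightarrow> 'v \<Rightarrow> real" where
  "reach_prob G \<sigma> \<tau> T x = lim (\<lambda>n. hit G \<sigma> \<tau> T n x)"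

definition absorbing :: "'v game \<Rightarrow> ('v \<Rightarrow> 'v) \<Rightarrow> ('v \<Rightarrow> 'v) \<Rightarrow> 'v set \<Rightarrow> bool" where
  "absorbing G \<sigma> \<tau> Z \<longleftrightarrow> Z \<subseteq> verts G - sinks G \<and>
     (\<forall>x\<in>Z. reach_prob G \<sigma> \<tau> (verts G - Z) x = 0)"

definition Zst :: "'v game \<Rightarrow> ('v \<Rightarrow> 'v) \<Rightarrow> ('v \<Rightarrow> 'v) \<Rightarrow> 'v set" where
  "Zst G \<sigma> \<tau> = \<Union>{Z. absorbing G \<sigma> \<tau> Z}"

definition Zmax :: "'v game \<Rightarrow> ('v \<Rightarrow> 'v) \<Rightarrow> 'v set" where
  "Zmax G \<sigma> = (GREATEST Z. \<exists>\<tau>. min_strategy G \<tau> \<and> Z = Zst G \<sigma> \<tau>)"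

end

theory Submission
  imports Defs
begin

definition wfg :: "'w game \<Rightarrow> bool" where
  "wfg K \<longleftrightarrow> finite (verts K) \<and> arcs K \<subseteq> verts K \<times> verts K \<and>
     (\<forall>x\<in>verts K. kind K x = MinV \<longrightarrow> outn K x \<noteq> {}) \<and>
     (\<forall>x\<in>verts K. kind K x = RandV \<longrightarrow> (\<forall>y\<in>verts K. (x,y) \<in> arcs K \<longrightarrow> 0 \<le> prob K x y) \<and>
        (\<Sum>y\<in>verts K. (if (x,y) \<in> arcs K then prob K x y else 0)) = 1) \<and>
     (\<forall>s\<in>sinks K. 0 \<le> sval K s)"

definition vstrat :: "'w game \<Rightarrow> ('w \<Rightarrow> 'w) \<Rightarrow> ('w \<Rightarrow> 'w) \<Rightarrow> bool" where
  "vstrat K \<rho> \<tau> \<longleftrightarrow> (\<forall>x\<in>verts K. kind K x = MaxV \<longrightarrow> \<rho> x \<in> verts K) \<and>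
     (\<forall>x\<in>verts K. kind K x = MinV \<longrightarrow> \<tau> x \<in> verts K)"

definition vi :: "'w game \<Rightarrow> ('w \<Rightarrow> 'w) \<Rightarrow> ('w \<Rightarrow> 'w) \<Rightarrow> nat \<Rightarrow> 'w \<Rightarrow> real" where
  "vi K \<rho> \<tau> n x = (\<Sum>s\<in>sinks K. sval K s * nstep K \<rho> \<tau> n x s)"

lemma finite_sinks: "wfg K \<Longrightarrow> finite (sinks K)"
  unfolding wfg_def sinks_def by auto

lemma vi_0: "wfg K \<Longrightarrow> vi K \<rho> \<tau> 0 x = (if x \<in> sinks K then sval K x else 0)"
  unfolding vi_def by (simp add: finite_sinks sum.delta' if_distrib cong: if_cong)

lemma vi_Suc: "vi K \<rho> \<tau> (Suc n) x = (\<Sum>z\<in>verts K. trans K \<rho> \<tau> x z * vi K \<rho> \<tau> n z)"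
proof -
  have "vi K \<rho> \<tau> (Suc n) x = (\<Sum>s\<in>sinks K. \<Sum>z\<in>verts K. trans K \<rho> \<tau> x z * (sval K s * nstep K \<rho> \<tau> n z s))"
    unfolding vi_def by (simp add: sum_distrib_left mult_ac)
  also have "\<dots> = (\<Sum>z\<in>verts K. \<Sum>s\<in>sinks K. trans K \<rho> \<tau> x z * (sval K s * nstep K \<rho> \<tau> n z s))"
    by (rule sum.swap)
  also have "\<dots> = (\<Sum>z\<in>verts K. trans K \<rho> \<tau> x z * vi K \<rho> \<tau> n z)"
    unfolding vi_def by (simp add: sum_distrib_left)
  finally show ?thesis .
qed

lemma trans_nonneg:
  assumes "wfg K" "x \<in> verts K" "y \<in> verts K"
  shows "0 \<le> trans K \<rho> \<tau> x y"
  using assms unfolding trans_def wfg_def by (auto split: vkind.split)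

lemma trans_max: "kind K x = MaxV \<Longrightarrow> trans K \<rho> \<tau> x y = (if y = \<rho> x then 1 else 0)"
  by (simp add: trans_def)
lemma trans_min: "kind K x = MinV \<Longrightarrow> trans K \<rho> \<tau> x y = (if y = \<tau> x then 1 else 0)"
  by (simp add: trans_def)
lemma trans_sink: "kind K x = SinkV \<Longrightarrow> trans K \<rho> \<tau> x y = (if y = x then 1 else 0)"
  by (simp add: trans_def)
lemma trans_rand: "kind K x = RandV \<Longrightarrow> trans K \<rho> \<tau> x y = (if (x,y) \<in> arcs K then prob K x y else 0)"
  by (simp add: trans_def)

lemma sum_ind: "finite V \<Longrightarrow> a \<in> V \<Longrightarrow> (\<Sum>y\<in>V. (if y = a then 1 else 0) * (F y::real)) = F a"
proof -
  assume "finite V" "a \<in> V"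
  have "(\<Sum>y\<in>V. (if y = a then 1 else 0) * (F y::real)) = (\<Sum>y\<in>V. if y = a then F y else 0)"
    by (rule sum.cong) auto
  then show ?thesis using \<open>finite V\<close> \<open>a \<in> V\<close> by simp
qed

lemma sum_trans_max:
  assumes "kind K x = MaxV" "finite (verts K)" "\<rho> x \<in> verts K"
  shows "(\<Sum>y\<in>verts K. trans K \<rho> \<tau> x y * F y) = F (\<rho> x)"
  using assms by (simp add: trans_max sum_ind)

lemma sum_trans_min:
  assumes "kind K x = MinV" "finite (verts K)" "\<tau> x \<in> verts K"
  shows "(\<Sum>y\<in>verts K. trans K \<rho> \<tau> x y * F y) = F (\<tau> x)"
  using assms by (simp add: trans_min sum_ind)

lemma sum_trans_sink:
  assumes "kind K x = SinkV" "finite (verts K)" "x \<in> verts K"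
  shows "(\<Sum>y\<in>verts K. trans K \<rho> \<tau> x y * F y) = F x"
  using assms by (simp add: trans_sink sum_ind)

lemma sum_trans_rand:
  assumes "kind K x = RandV"
  shows "(\<Sum>y\<in>verts K. trans K \<rho> \<tau> x y * F y) = (\<Sum>y\<in>verts K. (if (x,y) \<in> arcs K then prob K x y else 0) * F y)"
  using assms by (simp add: trans_rand)

lemma rowsum:
  assumes "wfg K" "vstrat K \<rho> \<tau>" "x \<in> verts K"
  shows "(\<Sum>y\<in>verts K. trans K \<rho> \<tau> x y) = 1"
proof -
  have fin: "finite (verts K)" using assms(1) by (simp add: wfg_def)
  show ?thesis
  proof (cases "kind K x")
    case MaxV then show ?thesis using sum_trans_max[OF MaxV fin, of \<rho> \<tau> "\<lambda>_. 1"] assms by (auto simp: vstrat_def)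
  next
    case MinV then show ?thesis using sum_trans_min[OF MinV fin, of \<tau> \<rho> "\<lambda>_. 1"] assms by (auto simp: vstrat_def)
  next
    case SinkV then show ?thesis using sum_trans_sink[OF SinkV fin, of \<rho> \<tau> "\<lambda>_. 1"] assms by auto
  next
    case RandV then show ?thesis using sum_trans_rand[OF RandV, of \<rho> \<tau> "\<lambda>_. 1"] assms by (auto simp: wfg_def)
  qed
qed

lemma sum_trans_le:
  assumes "wfg K" "vstrat K \<rho> \<tau>" "x \<in> verts K"
    and "\<And>y. y \<in> verts K \<Longrightarrow> trans K \<rho> \<tau> x y \<noteq> 0 \<Longrightarrow> F y \<le> c"
  shows "(\<Sum>y\<in>verts K. trans K \<rho> \<tau> x y * F y) \<le> c"
proof -
  have "(\<Sum>y\<in>verts K. trans K \<rho> \<tau> x y * F y) \<le> (\<Sum>y\<in>verts K. trans K \<rho> \<tau> x y * c)"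
  proof (rule sum_mono)
    fix y assume y: "y \<in> verts K"
    show "trans K \<rho> \<tau> x y * F y \<le> trans K \<rho> \<tau> x y * c"
    proof (cases "trans K \<rho> \<tau> x y = 0")
      case False then show ?thesis using assms(4)[OF y] trans_nonneg[OF assms(1,3) y]
        by (simp add: mult_left_mono)
    qed simp
  qed
  also have "\<dots> = (\<Sum>y\<in>verts K. trans K \<rho> \<tau> x y) * c" by (simp only: sum_distrib_right)
  also have "\<dots> = c" using rowsum[OF assms(1-3)] by simp
  finally show ?thesis .
qed

lemma sum_trans_eq:
  assumes "wfg K" "vstrat K \<rho> \<tau>" "x \<in> verts K"
    and "\<And>y. y \<in> verts K \<Longrightarrow> trans K \<rho> \<tau> x y \<noteq> 0 \<Longrightarrow> F y \<le> c"
    and "(\<Sum>y\<in>verts K. trans K \<rho> \<tau> x y * F y) = c"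
    and "y \<in> verts K" "trans K \<rho> \<tau> x y \<noteq> 0"
  shows "F y = c"
proof -
  have fin: "finite (verts K)" using assms(1) by (simp add: wfg_def)
  have "(\<Sum>y\<in>verts K. trans K \<rho> \<tau> x y * (c - F y)) = (\<Sum>y\<in>verts K. trans K \<rho> \<tau> x y) * c - c"
  proof -
    have "(\<Sum>y\<in>verts K. trans K \<rho> \<tau> x y * (c - F y)) = (\<Sum>y\<in>verts K. trans K \<rho> \<tau> x y * c - trans K \<rho> \<tau> x y * F y)"
      by (simp only: right_diff_distrib)
    also have "\<dots> = (\<Sum>y\<in>verts K. trans K \<rho> \<tau> x y * c) - c"
      by (simp only: sum_subtractf assms(5))
    also have "\<dots> = (\<Sum>y\<in>verts K. trans K \<rho> \<tau> x y) * c - c"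
      by (simp only: sum_distrib_right)
    finally show ?thesis .
  qed
  also have "\<dots> = 0" using rowsum[OF assms(1-3)] by simp
  finally have z: "(\<Sum>y\<in>verts K. trans K \<rho> \<tau> x y * (c - F y)) = 0" .
  have nn: "\<forall>y\<in>verts K. 0 \<le> trans K \<rho> \<tau> x y * (c - F y)"
  proof
    fix y assume y: "y \<in> verts K"
    show "0 \<le> trans K \<rho> \<tau> x y * (c - F y)"
    proof (cases "trans K \<rho> \<tau> x y = 0")
      case False then show ?thesis
        using assms(4)[OF y] trans_nonneg[OF assms(1,3) y] by (intro mult_nonneg_nonneg) auto
    qed simp
  qed
  have "\<forall>y\<in>verts K. trans K \<rho> \<tau> x y * (c - F y) = 0"
    using sum_nonneg_eq_0_iff[OF fin, of "\<lambda>y. trans K \<rho> \<tau> x y * (c - F y)"] nn z by simp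
  then have "trans K \<rho> \<tau> x y * (c - F y) = 0" using assms(6) by blast
  then show ?thesis using assms(7) by simp
qed

lemma vi_nonneg:
  assumes "wfg K" "vstrat K \<rho> \<tau>" "x \<in> verts K"
  shows "0 \<le> vi K \<rho> \<tau> n x"
  using assms(3)
proof (induction n arbitrary: x)
  case 0 then show ?case using assms(1) by (simp add: vi_0 wfg_def)
next
  case (Suc n) then show ?case
    by (simp add: vi_Suc, intro sum_nonneg mult_nonneg_nonneg trans_nonneg[OF assms(1)]) auto
qed

lemma vi_super:
  assumes "wfg K" "vstrat K \<rho> \<tau>"
    and "\<And>x. x \<in> verts K \<Longrightarrow> 0 \<le> f x"
    and "\<And>s. s \<in> sinks K \<Longrightarrow> sval K s \<le> f s"
    and "\<And>x. x \<in> verts K \<Longrightarrow> (\<Sum>y\<in>verts K. trans K \<rho> \<tau> x y * f y) \<le> f x"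
    and "x \<in> verts K"
  shows "vi K \<rho> \<tau> n x \<le> f x"
  using assms(6)
proof (induction n arbitrary: x)
  case 0 then show ?case using assms(1,3,4) by (simp add: vi_0)
next
  case (Suc n)
  have "vi K \<rho> \<tau> (Suc n) x = (\<Sum>y\<in>verts K. trans K \<rho> \<tau> x y * vi K \<rho> \<tau> n y)" by (rule vi_Suc)
  also have "\<dots> \<le> (\<Sum>y\<in>verts K. trans K \<rho> \<tau> x y * f y)"
    by (intro sum_mono mult_left_mono Suc.IH trans_nonneg[OF assms(1) Suc.prems])
  also have "\<dots> \<le> f x" by (rule assms(5)[OF Suc.prems])
  finally show ?case .
qed

lemma vi_mono:
  assumes "wfg K" "vstrat K \<rho> \<tau>" "x \<in> verts K"
  shows "vi K \<rho> \<tau> n x \<le> vi K \<rho> \<tau> (Suc n) x"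
  using assms(3)
proof (induction n arbitrary: x)
  case 0
  have fin: "finite (verts K)" using assms(1) by (simp add: wfg_def)
  show ?case
  proof (cases "x \<in> sinks K")
    case True
    then have "kind K x = SinkV" by (simp add: sinks_def)
    then have "vi K \<rho> \<tau> (Suc 0) x = vi K \<rho> \<tau> 0 x"
      using sum_trans_sink[OF _ fin 0] by (simp add: vi_Suc)
    then show ?thesis by simp
  next
    case False
    then have "vi K \<rho> \<tau> 0 x = 0" using assms(1) by (simp add: vi_0)
    then show ?thesis using vi_nonneg[OF assms(1,2) 0] by simp
  qed
next
  case (Suc n)
  have "vi K \<rho> \<tau> (Suc n) x = (\<Sum>y\<in>verts K. trans K \<rho> \<tau> x y * vi K \<rho> \<tau> n y)" by (rule vi_Suc)
  also have "\<dots> \<le> (\<Sum>y\<in>verts K. trans K \<rho> \<tau> x y * vi K \<rho> \<tau> (Suc n) y)"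
    by (intro sum_mono mult_left_mono Suc.IH trans_nonneg[OF assms(1) Suc.prems])
  also have "\<dots> = vi K \<rho> \<tau> (Suc (Suc n)) x" by (rule vi_Suc[symmetric])
  finally show ?case .
qed

lemma vi_bounded:
  assumes "wfg K" "vstrat K \<rho> \<tau>" "x \<in> verts K"
  shows "vi K \<rho> \<tau> n x \<le> (\<Sum>s\<in>sinks K. sval K s)"
proof (rule vi_super[OF assms(1,2)])
  have fs: "finite (sinks K)" using finite_sinks[OF assms(1)] .
  have nn: "\<And>s. s \<in> sinks K \<Longrightarrow> 0 \<le> sval K s" using assms(1) by (simp add: wfg_def)
  show "0 \<le> (\<Sum>s\<in>sinks K. sval K s)" for x by (rule sum_nonneg) (rule nn)
  show "sval K s \<le> (\<Sum>s\<in>sinks K. sval K s)" if "s \<in> sinks K" for s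
    by (rule member_le_sum[OF that _ fs]) (auto simp: nn)
  show "(\<Sum>y\<in>verts K. trans K \<rho> \<tau> x y * (\<Sum>s\<in>sinks K. sval K s)) \<le> (\<Sum>s\<in>sinks K. sval K s)"
    if "x \<in> verts K" for x
    using rowsum[OF assms(1,2) that] by (simp add: sum_distrib_right[symmetric])
qed (rule assms(3))

lemma pv_tendsto:
  assumes "wfg K" "vstrat K \<rho> \<tau>" "x \<in> verts K"
  shows "(\<lambda>n. vi K \<rho> \<tau> n x) \<longlonglongrightarrow> play_value K \<rho> \<tau> x"
proof -
  have inc: "incseq (\<lambda>n. vi K \<rho> \<tau> n x)" by (rule incseq_SucI) (rule vi_mono[OF assms])
  obtain L where L: "(\<lambda>n. vi K \<rho> \<tau> n x) \<longlonglongrightarrow> L"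
    using incseq_convergent[OF inc, of "\<Sum>s\<in>sinks K. sval K s"] vi_bounded[OF assms] by blast
  have "play_value K \<rho> \<tau> x = lim (\<lambda>n. vi K \<rho> \<tau> n x)" by (simp add: play_value_def vi_def)
  then show ?thesis using L limI by metis
qed

lemma pv_nonneg:
  assumes "wfg K" "vstrat K \<rho> \<tau>" "x \<in> verts K"
  shows "0 \<le> play_value K \<rho> \<tau> x"
  by (rule LIMSEQ_le_const[OF pv_tendsto[OF assms]]) (use vi_nonneg[OF assms] in auto)

lemma pv_super:
  assumes "wfg K" "vstrat K \<rho> \<tau>"
    and "\<And>x. x \<in> verts K \<Longrightarrow> 0 \<le> f x"
    and "\<And>s. s \<in> sinks K \<Longrightarrow> sval K s \<le> f s"
    and "\<And>x. x \<in> verts K \<Longrightarrow> (\<Sum>y\<in>verts K. trans K \<rho> \<tau> x y * f y) \<le> f x"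
    and "x \<in> verts K"
  shows "play_value K \<rho> \<tau> x \<le> f x"
  by (rule LIMSEQ_le_const2[OF pv_tendsto[OF assms(1,2,6)]]) (use vi_super[OF assms] in auto)

lemma pv_harm:
  assumes "wfg K" "vstrat K \<rho> \<tau>" "x \<in> verts K"
  shows "play_value K \<rho> \<tau> x = (\<Sum>y\<in>verts K. trans K \<rho> \<tau> x y * play_value K \<rho> \<tau> y)"
proof -
  have "(\<lambda>n. vi K \<rho> \<tau> (Suc n) x) \<longlonglongrightarrow> play_value K \<rho> \<tau> x"
    using LIMSEQ_Suc[OF pv_tendsto[OF assms]] .
  moreover have "(\<lambda>n. vi K \<rho> \<tau> (Suc n) x) \<longlonglongrightarrow> (\<Sum>y\<in>verts K. trans K \<rho> \<tau> x y * play_value K \<rho> \<tau> y)"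
    unfolding vi_Suc
    by (intro tendsto_sum tendsto_mult tendsto_const pv_tendsto[OF assms(1,2)])
  ultimately show ?thesis using LIMSEQ_unique by blast
qed

lemma pv_sink:
  assumes "wfg K" "vstrat K \<rho> \<tau>" "s \<in> sinks K"
  shows "play_value K \<rho> \<tau> s = sval K s"
proof -
  have fin: "finite (verts K)" using assms(1) by (simp add: wfg_def)
  have sv: "s \<in> verts K" "kind K s = SinkV" using assms(3) by (auto simp: sinks_def)
  have "vi K \<rho> \<tau> n s = sval K s" for n
  proof (induction n)
    case 0 then show ?case using assms by (simp add: vi_0)
  next
    case (Suc n) then show ?case using sum_trans_sink[OF sv(2) fin sv(1)] by (simp add: vi_Suc)
  qed
  then show ?thesis using pv_tendsto[OF assms(1,2) sv(1)] LIMSEQ_unique[OF _ tendsto_const] by simp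
qed

lemma pv_closed_zero:
  assumes "wfg K" "vstrat K \<rho> \<tau>" "Z \<subseteq> verts K - sinks K"
    and "\<And>x y. x \<in> Z \<Longrightarrow> y \<in> verts K \<Longrightarrow> trans K \<rho> \<tau> x y \<noteq> 0 \<Longrightarrow> y \<in> Z"
    and "x \<in> Z"
  shows "play_value K \<rho> \<tau> x = 0"
proof -
  have "vi K \<rho> \<tau> n x = 0" for n
    using assms(5)
  proof (induction n arbitrary: x)
    case 0 then show ?case using assms(1,3) by (auto simp: vi_0)
  next
    case (Suc n)
    have "vi K \<rho> \<tau> (Suc n) x = (\<Sum>y\<in>verts K. trans K \<rho> \<tau> x y * vi K \<rho> \<tau> n y)" by (rule vi_Suc)
    also have "\<dots> = 0"
    proof (rule sum.neutral, rule ballI)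
      fix y assume "y \<in> verts K"
      then show "trans K \<rho> \<tau> x y * vi K \<rho> \<tau> n y = 0"
        using Suc.IH assms(4)[OF Suc.prems] by (cases "trans K \<rho> \<tau> x y = 0") auto
    qed
    finally show ?case .
  qed
  moreover have "(\<lambda>n. vi K \<rho> \<tau> n x) \<longlonglongrightarrow> play_value K \<rho> \<tau> x"
    using pv_tendsto[OF assms(1,2)] assms(3,5) by auto
  ultimately have "(\<lambda>n. 0) \<longlonglongrightarrow> play_value K \<rho> \<tau> x" by simp
  then show ?thesis using LIMSEQ_unique[OF _ tendsto_const] by metis
qed

lemma trans_cong:
  assumes "x \<in> verts K" "kind K x = MinV \<Longrightarrow> \<tau>1 x = \<tau>2 x"
  shows "trans K \<rho> \<tau>1 x = trans K \<rho> \<tau>2 x"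
  using assms by (auto simp: trans_def fun_eq_iff split: vkind.split)

lemma pv_cong:
  assumes "wfg K" "\<And>x. x \<in> verts K \<Longrightarrow> kind K x = MinV \<Longrightarrow> \<tau>1 x = \<tau>2 x" "x \<in> verts K"
  shows "play_value K \<rho> \<tau>1 x = play_value K \<rho> \<tau>2 x"
proof -
  have "vi K \<rho> \<tau>1 n x = vi K \<rho> \<tau>2 n x" if "x \<in> verts K" for n x
    using that
  proof (induction n arbitrary: x)
    case 0 then show ?case using assms(1) by (simp add: vi_0)
  next
    case (Suc n) then show ?case
      using trans_cong[of _ K \<tau>1 \<tau>2 \<rho>] assms(2) by (simp add: vi_Suc)
  qed
  then show ?thesis using assms(3) by (simp add: play_value_def vi_def)
qed

lemma min_vstrat:
  assumes "wfg K" "\<forall>x\<in>verts K. kind K x = MaxV \<longrightarrow> \<rho> x \<in> verts K" "min_strategy K \<tau>"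
  shows "vstrat K \<rho> \<tau>"
  using assms unfolding vstrat_def min_strategy_def wfg_def by blast

lemma sum_trans_mono:
  assumes "wfg K" "x \<in> verts K" "\<And>y. y \<in> verts K \<Longrightarrow> f y \<le> g y"
  shows "(\<Sum>y\<in>verts K. trans K \<rho> \<tau> x y * f y) \<le> (\<Sum>y\<in>verts K. trans K \<rho> \<tau> x y * g y)"
  by (intro sum_mono mult_left_mono assms(3) trans_nonneg[OF assms(1,2)])

lemma min_strategy_exists:
  assumes "wfg K"
  shows "\<exists>\<tau>. min_strategy K \<tau>"
proof -
  define \<tau>0 where "\<tau>0 x = (SOME y. (x,y) \<in> arcs K)" for x
  have "min_strategy K \<tau>0"
    unfolding min_strategy_def
  proof (intro ballI impI)
    fix x assume "x \<in> verts K" "kind K x = MinV"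
    then have "\<exists>y. (x,y) \<in> arcs K" using assms by (auto simp: wfg_def outn_def)
    then show "(x, \<tau>0 x) \<in> arcs K" unfolding \<tau>0_def by (rule someI_ex)
  qed
  then show ?thesis by blast
qed

lemma br_exists:
  assumes wf: "wfg K" and vr: "\<forall>x\<in>verts K. kind K x = MaxV \<longrightarrow> \<rho> x \<in> verts K"
  shows "\<exists>\<tau>. best_response K \<rho> \<tau>"
proof -
  have fin: "finite (verts K)" using wf by (simp add: wfg_def)
  define MS where "MS = {\<tau>. min_strategy K \<tau>}"
  define Mv where "Mv = {x\<in>verts K. kind K x = MinV}"
  define R where "R \<tau> = (\<lambda>x. if x \<in> Mv then \<tau> x else undefined)" for \<tau> :: "'a \<Rightarrow> 'a"
  define S where "S \<tau> = (\<Sum>x\<in>verts K. play_value K \<rho> \<tau> x)" for \<tau>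
  have RS_sub: "R ` MS \<subseteq> {f. \<forall>x. (x \<in> Mv \<longrightarrow> f x \<in> verts K) \<and> (x \<notin> Mv \<longrightarrow> f x = undefined)}"
  proof
    fix f assume "f \<in> R ` MS"
    then obtain \<tau> where "\<tau> \<in> MS" "f = R \<tau>" by blast
    have ar: "arcs K \<subseteq> verts K \<times> verts K" using wf by (simp add: wfg_def)
    have "\<tau> x \<in> verts K" if "x \<in> Mv" for x
      using \<open>\<tau> \<in> MS\<close> that ar unfolding MS_def Mv_def min_strategy_def by blast
    then show "f \<in> {f. \<forall>x. (x \<in> Mv \<longrightarrow> f x \<in> verts K) \<and> (x \<notin> Mv \<longrightarrow> f x = undefined)}"
      using \<open>f = R \<tau>\<close> unfolding R_def by auto
  qed
  have finRS: "finite (R ` MS)"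
    by (rule finite_subset[OF RS_sub]) (rule finite_set_of_finite_funs, auto simp: Mv_def fin)
  have neRS: "R ` MS \<noteq> {}" using min_strategy_exists[OF wf] by (auto simp: MS_def)
  have RMS: "min_strategy K (R \<tau>)" if "\<tau> \<in> MS" for \<tau>
    using that by (auto simp: MS_def R_def Mv_def min_strategy_def)
  have SR: "S (R \<tau>) = S \<tau>" for \<tau>
    unfolding S_def by (intro sum.cong refl pv_cong[OF wf]) (simp add: R_def Mv_def)
  obtain \<tau>s where \<tau>s: "\<tau>s \<in> R ` MS" "S \<tau>s = Min (S ` R ` MS)"
  proof -
    have "Min (S ` R ` MS) \<in> S ` R ` MS" using Min_in[of "S ` R ` MS"] finRS neRS by simp
    then obtain \<tau> where "\<tau> \<in> R ` MS" "Min (S ` R ` MS) = S \<tau>" by (auto simp only: image_iff)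
    then show ?thesis using that by simp
  qed
  have \<tau>s_min: "S \<tau>s \<le> S \<tau>" if "\<tau> \<in> R ` MS" for \<tau>
    unfolding \<tau>s(2) by (rule Min_le) (use finRS that in auto)
  have ms_s: "min_strategy K \<tau>s"
  proof -
    obtain \<tau> where "\<tau> \<in> MS" "\<tau>s = R \<tau>" using \<tau>s(1) by blast
    then show ?thesis using RMS by simp
  qed
  have vs_s: "vstrat K \<rho> \<tau>s" using min_vstrat[OF wf vr ms_s] .
  have opt: "play_value K \<rho> \<tau>s x \<le> play_value K \<rho> \<tau> x" if ms: "min_strategy K \<tau>" and x: "x \<in> verts K" for \<tau> x
  proof -
    have vs: "vstrat K \<rho> \<tau>" using min_vstrat[OF wf vr ms] .
    define \<tau>3 where "\<tau>3 y = (if play_value K \<rho> \<tau> y < play_value K \<rho> \<tau>s y then \<tau> y else \<tau>s y)" for y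
    have ms3: "min_strategy K \<tau>3" using ms ms_s by (auto simp: min_strategy_def \<tau>3_def)
    have vs3: "vstrat K \<rho> \<tau>3" using min_vstrat[OF wf vr ms3] .
    define f where "f y = min (play_value K \<rho> \<tau>s y) (play_value K \<rho> \<tau> y)" for y
    have le3: "play_value K \<rho> \<tau>3 y \<le> f y" if y: "y \<in> verts K" for y
    proof (rule pv_super[OF wf vs3 _ _ _ y])
      show "0 \<le> f z" if "z \<in> verts K" for z
        using pv_nonneg[OF wf vs_s that] pv_nonneg[OF wf vs that] by (simp add: f_def)
      show "sval K s \<le> f s" if "s \<in> sinks K" for s
        using pv_sink[OF wf vs_s that] pv_sink[OF wf vs that] by (simp add: f_def)
      fix z assume z: "z \<in> verts K"
      have fle1: "f y \<le> play_value K \<rho> \<tau>s y" and fle2: "f y \<le> play_value K \<rho> \<tau> y" for y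
        by (auto simp: f_def)
      have A1: "(\<Sum>y\<in>verts K. trans K \<rho> \<tau>s z y * f y) \<le> play_value K \<rho> \<tau>s z"
        using sum_trans_mono[OF wf z fle1, of \<rho> \<tau>s] pv_harm[OF wf vs_s z] by simp
      have A2: "(\<Sum>y\<in>verts K. trans K \<rho> \<tau> z y * f y) \<le> play_value K \<rho> \<tau> z"
        using sum_trans_mono[OF wf z fle2, of \<rho> \<tau>] pv_harm[OF wf vs z] by simp
      show "(\<Sum>y\<in>verts K. trans K \<rho> \<tau>3 z y * f y) \<le> f z"
      proof (cases "kind K z = MinV")
        case True
        show ?thesis
        proof (cases "play_value K \<rho> \<tau> z < play_value K \<rho> \<tau>s z")
          case True
          then have "trans K \<rho> \<tau>3 z = trans K \<rho> \<tau> z" by (intro trans_cong[OF z]) (simp add: \<tau>3_def)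
          then show ?thesis using A2 True by (simp add: f_def)
        next
          case False
          then have "trans K \<rho> \<tau>3 z = trans K \<rho> \<tau>s z" by (intro trans_cong[OF z]) (simp add: \<tau>3_def)
          then show ?thesis using A1 False by (simp add: f_def)
        qed
      next
        case False
        then have "trans K \<rho> \<tau>3 z = trans K \<rho> \<tau> z" "trans K \<rho> \<tau>3 z = trans K \<rho> \<tau>s z"
          by (auto intro!: trans_cong[OF z])
        then show ?thesis using A1 A2 by (simp add: f_def)
      qed
    qed
    have "S \<tau>s \<le> S (R \<tau>3)" using \<tau>s_min ms3 by (auto simp: MS_def)
    also have "\<dots> = S \<tau>3" by (rule SR)
    also have "\<dots> \<le> (\<Sum>y\<in>verts K. f y)" unfolding S_def by (rule sum_mono) (rule le3)
    finally have "(\<Sum>y\<in>verts K. play_value K \<rho> \<tau>s y - f y) \<le> 0"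
      by (simp add: S_def sum_subtractf)
    moreover have "\<forall>y\<in>verts K. 0 \<le> play_value K \<rho> \<tau>s y - f y" by (auto simp: f_def)
    ultimately have "\<forall>y\<in>verts K. play_value K \<rho> \<tau>s y - f y = 0"
    proof -
      assume a1: "(\<Sum>y\<in>verts K. play_value K \<rho> \<tau>s y - f y) \<le> 0" and a2: "\<forall>y\<in>verts K. 0 \<le> play_value K \<rho> \<tau>s y - f y"
      have "0 \<le> (\<Sum>y\<in>verts K. play_value K \<rho> \<tau>s y - f y)" using a2 by (intro sum_nonneg) auto
      then have "(\<Sum>y\<in>verts K. play_value K \<rho> \<tau>s y - f y) = 0" using a1 by linarith
      then show ?thesis using sum_nonneg_eq_0_iff[OF fin, of "\<lambda>y. play_value K \<rho> \<tau>s y - f y"] a2 by simp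
    qed
    then show ?thesis using x by (auto simp: f_def)
  qed
  have "best_response K \<rho> \<tau>s" unfolding best_response_def using ms_s opt by blast
  then show ?thesis by blast
qed

definition bresp :: "'w game \<Rightarrow> ('w \<Rightarrow> 'w) \<Rightarrow> ('w \<Rightarrow> 'w)" where
  "bresp K \<rho> = (SOME \<tau>. best_response K \<rho> \<tau>)"

lemma bresp:
  assumes "wfg K" "\<forall>x\<in>verts K. kind K x = MaxV \<longrightarrow> \<rho> x \<in> verts K"
  shows "best_response K \<rho> (bresp K \<rho>)" "min_strategy K (bresp K \<rho>)"
    "vstrat K \<rho> (bresp K \<rho>)" "val_max K \<rho> = play_value K \<rho> (bresp K \<rho>)"
proof -
  show br: "best_response K \<rho> (bresp K \<rho>)" unfolding bresp_def using br_exists[OF assms] by (rule someI_ex)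
  then show ms: "min_strategy K (bresp K \<rho>)" by (simp add: best_response_def)
  show "vstrat K \<rho> (bresp K \<rho>)" by (rule min_vstrat[OF assms ms])
  show "val_max K \<rho> = play_value K \<rho> (bresp K \<rho>)" by (simp add: val_max_def bresp_def fun_eq_iff)
qed

lemma vm_le:
  assumes "wfg K" "\<forall>x\<in>verts K. kind K x = MaxV \<longrightarrow> \<rho> x \<in> verts K" "min_strategy K \<tau>" "x \<in> verts K"
  shows "val_max K \<rho> x \<le> play_value K \<rho> \<tau> x"
  using bresp(1,4)[OF assms(1,2)] assms(3,4) by (simp add: best_response_def)

lemma vm_nonneg:
  assumes "wfg K" "\<forall>x\<in>verts K. kind K x = MaxV \<longrightarrow> \<rho> x \<in> verts K" "x \<in> verts K"
  shows "0 \<le> val_max K \<rho> x"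
  using bresp(3,4)[OF assms(1,2)] pv_nonneg[OF assms(1) _ assms(3)] by simp

lemma vm_harm:
  assumes "wfg K" "\<forall>x\<in>verts K. kind K x = MaxV \<longrightarrow> \<rho> x \<in> verts K" "x \<in> verts K"
  shows "val_max K \<rho> x = (\<Sum>y\<in>verts K. trans K \<rho> (bresp K \<rho>) x y * val_max K \<rho> y)"
  using bresp(3,4)[OF assms(1,2)] pv_harm[OF assms(1) _ assms(3)] by simp

lemma vm_sink:
  assumes "wfg K" "\<forall>x\<in>verts K. kind K x = MaxV \<longrightarrow> \<rho> x \<in> verts K" "s \<in> sinks K"
  shows "val_max K \<rho> s = sval K s"
  using bresp(3,4)[OF assms(1,2)] pv_sink[OF assms(1) _ assms(3)] by simp

lemma vm_min:
  assumes wf: "wfg K" and vr: "\<forall>x\<in>verts K. kind K x = MaxV \<longrightarrow> \<rho> x \<in> verts K"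
    and x: "x \<in> verts K" and k: "kind K x = MinV" and a: "(x,z) \<in> arcs K"
  shows "val_max K \<rho> x \<le> val_max K \<rho> z"
proof (rule ccontr)
  assume "\<not> ?thesis"
  then have lt: "val_max K \<rho> z < val_max K \<rho> x" by simp
  have fin: "finite (verts K)" using wf by (simp add: wfg_def)
  have zv: "z \<in> verts K" using a wf by (auto simp: wfg_def)
  define \<tau>b where "\<tau>b = bresp K \<rho>"
  have B: "min_strategy K \<tau>b" "vstrat K \<rho> \<tau>b" "val_max K \<rho> = play_value K \<rho> \<tau>b"
    using bresp[OF wf vr] by (auto simp: \<tau>b_def)
  define \<tau>z where "\<tau>z = \<tau>b(x := z)"
  have msz: "min_strategy K \<tau>z" using B(1) a by (auto simp: min_strategy_def \<tau>z_def)
  have vsz: "vstrat K \<rho> \<tau>z" using min_vstrat[OF wf vr msz] .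
  have le: "play_value K \<rho> \<tau>z y \<le> val_max K \<rho> y" if "y \<in> verts K" for y
  proof (rule pv_super[OF wf vsz _ _ _ that])
    show "0 \<le> val_max K \<rho> y" if "y \<in> verts K" for y using vm_nonneg[OF wf vr that] .
    show "sval K s \<le> val_max K \<rho> s" if "s \<in> sinks K" for s using vm_sink[OF wf vr that] by simp
    fix y assume y: "y \<in> verts K"
    show "(\<Sum>w\<in>verts K. trans K \<rho> \<tau>z y w * val_max K \<rho> w) \<le> val_max K \<rho> y"
    proof (cases "y = x")
      case True
      then show ?thesis using sum_trans_min[OF k fin, of \<tau>z] zv lt by (simp add: \<tau>z_def)
    next
      case False
      then have "trans K \<rho> \<tau>z y = trans K \<rho> \<tau>b y" by (intro trans_cong[OF y]) (simp add: \<tau>z_def)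
      then show ?thesis using vm_harm[OF wf vr y] by (simp add: \<tau>b_def)
    qed
  qed
  have "play_value K \<rho> \<tau>z x = play_value K \<rho> \<tau>z z"
    using pv_harm[OF wf vsz x] sum_trans_min[OF k fin, of \<tau>z] zv by (simp add: \<tau>z_def)
  also have "\<dots> \<le> val_max K \<rho> z" by (rule le[OF zv])
  also have "\<dots> < val_max K \<rho> x" by (rule lt)
  also have "\<dots> \<le> play_value K \<rho> \<tau>z x" by (rule vm_le[OF wf vr msz x])
  finally show False by simp
qed

lemma ssgD:
  assumes "ssg G"
  shows "finite (verts G)" "arcs G \<subseteq> verts G \<times> verts G"
    "\<And>x. x \<in> verts G \<Longrightarrow> kind G x \<noteq> SinkV \<Longrightarrow> outn G x \<noteq> {}"
    "\<And>x y. x \<in> verts G \<Longrightarrow> kind G x = RandV \<Longrightarrow> y \<in> outn G x \<Longrightarrow> 0 < prob G x y"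
    "\<And>x. x \<in> verts G \<Longrightarrow> kind G x = RandV \<Longrightarrow> (\<Sum>y\<in>outn G x. prob G x y) = 1"
    "\<And>s. s \<in> sinks G \<Longrightarrow> 0 \<le> sval G s"
    "\<And>s. s \<in> sinks G \<Longrightarrow> sval G s \<le> 1"
proof -
  note a = assms[unfolded ssg_def]
  show "finite (verts G)" using a by (elim conjE)
  show "arcs G \<subseteq> verts G \<times> verts G" using a by (elim conjE)
  show "\<And>x. x \<in> verts G \<Longrightarrow> kind G x \<noteq> SinkV \<Longrightarrow> outn G x \<noteq> {}" using a by (elim conjE) blast
  show "\<And>x y. x \<in> verts G \<Longrightarrow> kind G x = RandV \<Longrightarrow> y \<in> outn G x \<Longrightarrow> 0 < prob G x y" using a by (elim conjE) blast
  show "\<And>x. x \<in> verts G \<Longrightarrow> kind G x = RandV \<Longrightarrow> (\<Sum>y\<in>outn G x. prob G x y) = 1" using a by (elim conjE) blast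
  show "\<And>s. s \<in> sinks G \<Longrightarrow> 0 \<le> sval G s" using a by (elim conjE) blast
  show "\<And>s. s \<in> sinks G \<Longrightarrow> sval G s \<le> 1" using a by (elim conjE) blast
qed

lemma ssg_wfg:
  assumes "ssg G" shows "wfg G"
proof -
  note D = ssgD[OF assms]
  have ar: "arcs G \<subseteq> verts G \<times> verts G" and fin: "finite (verts G)" using D by auto
  have o: "outn G x = {y\<in>verts G. (x,y) \<in> arcs G}" for x using ar by (auto simp: outn_def)
  have r: "(\<Sum>y\<in>verts G. (if (x,y) \<in> arcs G then prob G x y else 0)) = 1"
    if "x \<in> verts G" "kind G x = RandV" for x
  proof -
    have "(\<Sum>y\<in>verts G. (if (x,y) \<in> arcs G then prob G x y else 0)) = (\<Sum>y\<in>outn G x. prob G x y)"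
      unfolding o by (simp add: sum.inter_filter[OF fin])
    also have "\<dots> = 1" using D(5) that .
    finally show ?thesis .
  qed
  have p: "0 \<le> prob G x y" if "x \<in> verts G" "kind G x = RandV" "(x,y) \<in> arcs G" for x y
  proof -
    have "y \<in> outn G x" using that by (simp add: outn_def)
    then show ?thesis using D(4)[OF that(1,2)] by (simp add: less_imp_le)
  qed
  have m: "outn G x \<noteq> {}" if "x \<in> verts G" "kind G x = MinV" for x using D(3) that by simp
  show ?thesis unfolding wfg_def using ar fin r p m D(6) by blast
qed

lemma max_vr: "max_strategy G \<sigma> \<Longrightarrow> ssg G \<Longrightarrow> \<forall>x\<in>verts G. kind G x = MaxV \<longrightarrow> \<sigma> x \<in> verts G"
  using ssgD(2) unfolding max_strategy_def by blast

lemma hit_Suc_notin: "x \<notin> T \<Longrightarrow> hit K \<rho> \<tau> T (Suc n) x = (\<Sum>y\<in>verts K. trans K \<rho> \<tau> x y * hit K \<rho> \<tau> T n y)"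
  by simp

lemma hit_nonneg:
  assumes "wfg K" "x \<in> verts K"
  shows "0 \<le> hit K \<rho> \<tau> T n x"
  using assms(2)
proof (induction n arbitrary: x)
  case (Suc n)
  show ?case
  proof (cases "x \<in> T")
    case False
    have "0 \<le> (\<Sum>y\<in>verts K. trans K \<rho> \<tau> x y * hit K \<rho> \<tau> T n y)"
      by (intro sum_nonneg mult_nonneg_nonneg trans_nonneg[OF assms(1) Suc.prems] Suc.IH)
    then show ?thesis using False by simp
  qed simp
qed simp

lemma hit_le1:
  assumes "wfg K" "vstrat K \<rho> \<tau>" "x \<in> verts K"
  shows "hit K \<rho> \<tau> T n x \<le> 1"
  using assms(3)
proof (induction n arbitrary: x)
  case (Suc n)
  show ?case
  proof (cases "x \<in> T")
    case False
    then have "hit K \<rho> \<tau> T (Suc n) x = (\<Sum>y\<in>verts K. trans K \<rho> \<tau> x y * hit K \<rho> \<tau> T n y)" by simp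
    also have "\<dots> \<le> 1" by (rule sum_trans_le[OF assms(1,2) Suc.prems]) (rule Suc.IH)
    finally show ?thesis .
  qed simp
qed simp

lemma hit_mono:
  assumes "wfg K" "x \<in> verts K"
  shows "hit K \<rho> \<tau> T n x \<le> hit K \<rho> \<tau> T (Suc n) x"
  using assms(2)
proof (induction n arbitrary: x)
  case 0
  show ?case
  proof (cases "x \<in> T")
    case False
    have "0 \<le> (\<Sum>y\<in>verts K. trans K \<rho> \<tau> x y * hit K \<rho> \<tau> T 0 y)"
      by (intro sum_nonneg mult_nonneg_nonneg trans_nonneg[OF assms(1) 0] hit_nonneg[OF assms(1)])
    then show ?thesis using False by simp
  qed simp
next
  case (Suc n)
  show ?case
  proof (cases "x \<in> T")
    case False
    have "hit K \<rho> \<tau> T (Suc n) x = (\<Sum>y\<in>verts K. trans K \<rho> \<tau> x y * hit K \<rho> \<tau> T n y)" using False by simp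
    also have "\<dots> \<le> (\<Sum>y\<in>verts K. trans K \<rho> \<tau> x y * hit K \<rho> \<tau> T (Suc n) y)"
      by (intro sum_mono mult_left_mono Suc.IH trans_nonneg[OF assms(1) Suc.prems])
    also have "\<dots> = hit K \<rho> \<tau> T (Suc (Suc n)) x" using False by simp
    finally show ?thesis .
  qed simp
qed

lemma hit_tendsto:
  assumes "wfg K" "vstrat K \<rho> \<tau>" "x \<in> verts K"
  shows "(\<lambda>n. hit K \<rho> \<tau> T n x) \<longlonglongrightarrow> reach_prob K \<rho> \<tau> T x"
proof -
  have inc: "incseq (\<lambda>n. hit K \<rho> \<tau> T n x)" by (rule incseq_SucI) (rule hit_mono[OF assms(1,3)])
  have b: "\<forall>i. hit K \<rho> \<tau> T i x \<le> 1" using hit_le1[OF assms] by simp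
  obtain L where L: "(\<lambda>n. hit K \<rho> \<tau> T n x) \<longlonglongrightarrow> L" "\<forall>i. hit K \<rho> \<tau> T i x \<le> L"
    by (rule incseq_convergent[OF inc b])
  then show ?thesis unfolding reach_prob_def using limI by metis
qed

definition clsd :: "'w game \<Rightarrow> ('w \<Rightarrow> 'w) \<Rightarrow> ('w \<Rightarrow> 'w) \<Rightarrow> 'w set \<Rightarrow> bool" where
  "clsd K \<rho> \<tau> Z \<longleftrightarrow> Z \<subseteq> verts K - sinks K \<and> (\<forall>x\<in>Z. \<forall>y\<in>verts K. trans K \<rho> \<tau> x y \<noteq> 0 \<longrightarrow> y \<in> Z)"

lemma absorbing_closed:
  assumes "wfg K" "vstrat K \<rho> \<tau>"
  shows "absorbing K \<rho> \<tau> Z \<longleftrightarrow> clsd K \<rho> \<tau> Z"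
proof
  assume ab: "absorbing K \<rho> \<tau> Z"
  have sub: "Z \<subseteq> verts K - sinks K" using ab by (simp add: absorbing_def)
  have "y \<in> Z" if x: "x \<in> Z" and y: "y \<in> verts K" and t: "trans K \<rho> \<tau> x y \<noteq> 0" for x y
  proof (rule ccontr)
    assume "y \<notin> Z"
    then have yT: "y \<in> verts K - Z" using y by simp
    have xv: "x \<in> verts K" and xT: "x \<notin> verts K - Z" using x sub by auto
    have tp: "0 < trans K \<rho> \<tau> x y" using t trans_nonneg[OF assms(1) xv y, where \<rho>=\<rho> and \<tau>=\<tau>] by linarith
    have "trans K \<rho> \<tau> x y * hit K \<rho> \<tau> (verts K - Z) 0 y \<le> (\<Sum>z\<in>verts K. trans K \<rho> \<tau> x z * hit K \<rho> \<tau> (verts K - Z) 0 z)"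
      by (rule member_le_sum[OF y]) (use assms(1) trans_nonneg[OF assms(1) xv] hit_nonneg[OF assms(1)] in \<open>auto simp: wfg_def intro: mult_nonneg_nonneg\<close>)
    also have "\<dots> = hit K \<rho> \<tau> (verts K - Z) (Suc 0) x" by (rule hit_Suc_notin[OF xT, symmetric])
    also have "\<dots> \<le> reach_prob K \<rho> \<tau> (verts K - Z) x"
      by (rule incseq_le[OF incseq_SucI hit_tendsto[OF assms xv]]) (rule hit_mono[OF assms(1) xv])
    also have "\<dots> = 0" using ab x by (simp add: absorbing_def)
    finally show False using tp yT by simp
  qed
  then show "clsd K \<rho> \<tau> Z" using sub by (auto simp: clsd_def)
next
  assume cl: "clsd K \<rho> \<tau> Z"
  have sub: "Z \<subseteq> verts K - sinks K" using cl by (simp add: clsd_def)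
  have h: "hit K \<rho> \<tau> (verts K - Z) n x = 0" if "x \<in> Z" for n x
    using that
  proof (induction n arbitrary: x)
    case (Suc n)
    have "hit K \<rho> \<tau> (verts K - Z) (Suc n) x = (\<Sum>y\<in>verts K. trans K \<rho> \<tau> x y * hit K \<rho> \<tau> (verts K - Z) n y)"
      using Suc.prems by simp
    also have "\<dots> = 0"
    proof (rule sum.neutral, rule ballI)
      fix y assume "y \<in> verts K"
      then show "trans K \<rho> \<tau> x y * hit K \<rho> \<tau> (verts K - Z) n y = 0"
        using Suc.IH cl Suc.prems unfolding clsd_def by (cases "trans K \<rho> \<tau> x y = 0") auto
    qed
    finally show ?case .
  qed simp
  have "reach_prob K \<rho> \<tau> (verts K - Z) x = 0" if "x \<in> Z" for x
    unfolding reach_prob_def h[OF that] by (rule limI) simp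
  then show "absorbing K \<rho> \<tau> Z" using sub by (simp add: absorbing_def)
qed

lemma Zst_closed:
  assumes "wfg K" "vstrat K \<rho> \<tau>"
  shows "Zst K \<rho> \<tau> = \<Union>{Z. clsd K \<rho> \<tau> Z}" "clsd K \<rho> \<tau> (Zst K \<rho> \<tau>)"
proof -
  have "{Z. absorbing K \<rho> \<tau> Z} = {Z. clsd K \<rho> \<tau> Z}" using absorbing_closed[OF assms] by blast
  then show e: "Zst K \<rho> \<tau> = \<Union>{Z. clsd K \<rho> \<tau> Z}" unfolding Zst_def by simp
  show "clsd K \<rho> \<tau> (Zst K \<rho> \<tau>)" unfolding e clsd_def by blast
qed

definition post :: "'v game \<Rightarrow> ('v \<Rightarrow> 'v) \<Rightarrow> 'v set \<Rightarrow> bool" where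
  "post G \<rho> Z \<longleftrightarrow> Z \<subseteq> verts G - sinks G \<and> (\<forall>x\<in>Z. (kind G x = MaxV \<longrightarrow> \<rho> x \<in> Z) \<and>
     (kind G x = RandV \<longrightarrow> (\<forall>y. (x,y) \<in> arcs G \<longrightarrow> y \<in> Z)) \<and>
     (kind G x = MinV \<longrightarrow> (\<exists>y\<in>Z. (x,y) \<in> arcs G)))"

definition trap :: "'v game \<Rightarrow> ('v \<Rightarrow> 'v) \<Rightarrow> 'v set" where
  "trap G \<rho> = \<Union>{Z. post G \<rho> Z}"

lemma post_trap: "post G \<rho> (trap G \<rho>)"
  unfolding post_def trap_def by blast

lemma post_sub_trap: "post G \<rho> Z \<Longrightarrow> Z \<subseteq> trap G \<rho>"
  unfolding trap_def by blast

definition trapstr :: "'v game \<Rightarrow> ('v \<Rightarrow> 'v) \<Rightarrow> 'v \<Rightarrow> 'v" where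
  "trapstr G \<rho> x = (if x \<in> trap G \<rho> \<and> kind G x = MinV then (SOME y. y \<in> trap G \<rho> \<and> (x,y) \<in> arcs G)
      else (SOME y. (x,y) \<in> arcs G))"

lemma trapstr:
  assumes "ssg G"
  shows "min_strategy G (trapstr G \<rho>)"
    "\<And>x. x \<in> trap G \<rho> \<Longrightarrow> kind G x = MinV \<Longrightarrow> trapstr G \<rho> x \<in> trap G \<rho> \<and> (x, trapstr G \<rho> x) \<in> arcs G"
proof -
  show t: "trapstr G \<rho> x \<in> trap G \<rho> \<and> (x, trapstr G \<rho> x) \<in> arcs G" if "x \<in> trap G \<rho>" "kind G x = MinV" for x
  proof -
    have "\<exists>y. y \<in> trap G \<rho> \<and> (x,y) \<in> arcs G" using post_trap[of G \<rho>] that unfolding post_def by blast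
    then have "(SOME y. y \<in> trap G \<rho> \<and> (x,y) \<in> arcs G) \<in> trap G \<rho> \<and> (x, SOME y. y \<in> trap G \<rho> \<and> (x,y) \<in> arcs G) \<in> arcs G"
      by (rule someI_ex)
    then show ?thesis using that unfolding trapstr_def by simp
  qed
  show "min_strategy G (trapstr G \<rho>)" unfolding min_strategy_def
  proof (intro ballI impI)
    fix x assume x: "x \<in> verts G" "kind G x = MinV"
    show "(x, trapstr G \<rho> x) \<in> arcs G"
    proof (cases "x \<in> trap G \<rho>")
      case True then show ?thesis using t x by blast
    next
      case False
      have "\<exists>y. (x,y) \<in> arcs G" using ssgD(3)[OF assms x(1)] x(2) by (auto simp: outn_def)
      then have "(x, SOME y. (x,y) \<in> arcs G) \<in> arcs G" by (rule someI_ex)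
      then show ?thesis using False unfolding trapstr_def by simp
    qed
  qed
qed

lemma closed_post:
  assumes "ssg G" "max_strategy G \<rho>" "min_strategy G \<tau>" "clsd G \<rho> \<tau> Z"
  shows "post G \<rho> Z"
proof -
  have wf: "wfg G" by (rule ssg_wfg[OF assms(1)])
  have vr: "\<forall>x\<in>verts G. kind G x = MaxV \<longrightarrow> \<rho> x \<in> verts G" by (rule max_vr[OF assms(2,1)])
  have ar: "arcs G \<subseteq> verts G \<times> verts G" using ssgD(2)[OF assms(1)] .
  have sub: "Z \<subseteq> verts G - sinks G" and cl: "\<And>x y. x \<in> Z \<Longrightarrow> y \<in> verts G \<Longrightarrow> trans G \<rho> \<tau> x y \<noteq> 0 \<Longrightarrow> y \<in> Z"
    using assms(4) by (auto simp: clsd_def)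
  have "(kind G x = MaxV \<longrightarrow> \<rho> x \<in> Z) \<and> (kind G x = RandV \<longrightarrow> (\<forall>y. (x,y) \<in> arcs G \<longrightarrow> y \<in> Z)) \<and>
     (kind G x = MinV \<longrightarrow> (\<exists>y\<in>Z. (x,y) \<in> arcs G))" if x: "x \<in> Z" for x
  proof (intro conjI impI allI)
    have xv: "x \<in> verts G" using x sub by auto
    show "\<rho> x \<in> Z" if "kind G x = MaxV"
      using cl[OF x] vr xv that by (simp add: trans_max)
    show "\<exists>y\<in>Z. (x,y) \<in> arcs G" if k: "kind G x = MinV"
    proof -
      have a: "(x, \<tau> x) \<in> arcs G" using assms(3) xv k by (simp add: min_strategy_def)
      then have "\<tau> x \<in> verts G" using ar by auto
      then have "\<tau> x \<in> Z" using cl[OF x] k by (simp add: trans_min)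
      then show ?thesis using a by blast
    qed
    fix y assume k: "kind G x = RandV" and a: "(x,y) \<in> arcs G"
    have yv: "y \<in> verts G" using a ar by auto
    have "0 < prob G x y" using ssgD(4)[OF assms(1) xv k] a by (simp add: outn_def)
    then show "y \<in> Z" using cl[OF x yv] k a by (simp add: trans_rand)
  qed
  then show ?thesis using sub by (simp add: post_def)
qed

lemma trap_closed:
  assumes "ssg G"
  shows "clsd G \<rho> (trapstr G \<rho>) (trap G \<rho>)"
proof -
  have sub: "trap G \<rho> \<subseteq> verts G - sinks G" using post_trap[of G \<rho>] by (simp add: post_def)
  have "y \<in> trap G \<rho>" if x: "x \<in> trap G \<rho>" and y: "y \<in> verts G" and t: "trans G \<rho> (trapstr G \<rho>) x y \<noteq> 0" for x y
  proof (cases "kind G x")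
    case MaxV then show ?thesis using t post_trap[of G \<rho>] x by (auto simp: trans_max post_def split: if_splits)
  next
    case MinV then show ?thesis using t trapstr(2)[OF assms x] by (auto simp: trans_min split: if_splits)
  next
    case RandV then show ?thesis using t post_trap[of G \<rho>] x by (auto simp: trans_rand post_def split: if_splits)
  next
    case SinkV then show ?thesis using x sub by (auto simp: sinks_def)
  qed
  then show ?thesis using sub by (simp add: clsd_def)
qed

lemma Zmax_trap:
  assumes "ssg G" "max_strategy G \<rho>"
  shows "Zmax G \<rho> = trap G \<rho>"
proof -
  have wf: "wfg G" by (rule ssg_wfg[OF assms(1)])
  have vr: "\<forall>x\<in>verts G. kind G x = MaxV \<longrightarrow> \<rho> x \<in> verts G" by (rule max_vr[OF assms(2,1)])
  have le: "Zst G \<rho> \<tau> \<subseteq> trap G \<rho>" if "min_strategy G \<tau>" for \<tau>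
  proof -
    have vs: "vstrat G \<rho> \<tau>" by (rule min_vstrat[OF wf vr that])
    show ?thesis by (rule post_sub_trap, rule closed_post[OF assms that], rule Zst_closed(2)[OF wf vs])
  qed
  have ms: "min_strategy G (trapstr G \<rho>)" by (rule trapstr(1)[OF assms(1)])
  have vs: "vstrat G \<rho> (trapstr G \<rho>)" by (rule min_vstrat[OF wf vr ms])
  have eq: "Zst G \<rho> (trapstr G \<rho>) = trap G \<rho>"
    using le[OF ms] trap_closed[OF assms(1), of \<rho>] Zst_closed(1)[OF wf vs] by blast
  show ?thesis unfolding Zmax_def
  proof (rule Greatest_equality)
    show "\<exists>\<tau>. min_strategy G \<tau> \<and> trap G \<rho> = Zst G \<rho> \<tau>" using ms eq by metis
    show "y \<subseteq> trap G \<rho>" if "\<exists>\<tau>. min_strategy G \<tau> \<and> y = Zst G \<rho> \<tau>" for y using that le by blast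
  qed
qed

lemma tr_simps:
  "verts (transform G A \<sigma>) = Inl ` verts G \<union> Inr ` A"
  "kind (transform G A \<sigma>) (Inl x) = kind G x"
  "kind (transform G A \<sigma>) (Inr e) = SinkV"
  "(Inl x, Inl y) \<in> arcs (transform G A \<sigma>) \<longleftrightarrow> (x,y) \<in> arcs G \<and> (x,y) \<notin> A"
  "(Inl x, Inr e) \<in> arcs (transform G A \<sigma>) \<longleftrightarrow> e \<in> A \<and> fst e = x"
  "(Inr e, u) \<in> arcs (transform G A \<sigma>) \<longleftrightarrow> e \<in> A \<and> u = Inr e"
  "prob (transform G A \<sigma>) (Inl x) (Inl y) = prob G x y"
  "prob (transform G A \<sigma>) (Inl x) (Inr e) = (if fst e = x then prob G x (snd e) else 0)"
  "sval (transform G A \<sigma>) (Inl x) = sval G x"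
  "sval (transform G A \<sigma>) (Inr e) = val_max G \<sigma> (snd e)"
  apply (auto simp: transform_def)
  by (metis prod.collapse)+

lemma tr_sinks: "sinks (transform G A \<sigma>) = Inl ` sinks G \<union> Inr ` A"
  by (auto simp: sinks_def tr_simps)

lemma lift_Inl: "lift_strategy A \<rho> (Inl x) = (if (x, \<rho> x) \<in> A then Inr (x, \<rho> x) else Inl (\<rho> x))"
  by (simp add: lift_strategy_def)

lemma tr_rand_sum:
  assumes ar: "arcs G \<subseteq> verts G \<times> verts G" and fin: "finite (verts G)" and A: "A \<subseteq> arcs G"
  shows "(\<Sum>u\<in>verts (transform G A \<sigma>). (if (Inl x, u) \<in> arcs (transform G A \<sigma>) then prob (transform G A \<sigma>) (Inl x) u else 0) * F u)
    = (\<Sum>y\<in>verts G. (if (x,y) \<in> arcs G then prob G x y else 0) * F (if (x,y) \<in> A then Inr (x,y) else Inl y))"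
proof -
  let ?H = "transform G A \<sigma>"
  have finA: "finite A" using finite_subset[OF subset_trans[OF A ar]] fin by auto
  have "(\<Sum>u\<in>verts ?H. (if (Inl x, u) \<in> arcs ?H then prob ?H (Inl x) u else 0) * F u)
     = (\<Sum>u\<in>Inl ` verts G. (if (Inl x, u) \<in> arcs ?H then prob ?H (Inl x) u else 0) * F u)
     + (\<Sum>u\<in>Inr ` A. (if (Inl x, u) \<in> arcs ?H then prob ?H (Inl x) u else 0) * F u)"
    unfolding tr_simps(1) by (rule sum.union_disjoint) (use fin finA in auto)
  also have "(\<Sum>u\<in>Inl ` verts G. (if (Inl x, u) \<in> arcs ?H then prob ?H (Inl x) u else 0) * F u)
      = (\<Sum>y\<in>verts G. (if (x,y) \<in> arcs G \<and> (x,y) \<notin> A then prob G x y * F (Inl y) else 0))"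
    by (subst sum.reindex) (auto simp: tr_simps intro!: sum.cong)
  also have "(\<Sum>u\<in>Inr ` A. (if (Inl x, u) \<in> arcs ?H then prob ?H (Inl x) u else 0) * F u)
      = (\<Sum>e\<in>A. (if fst e = x then prob G x (snd e) * F (Inr e) else 0))"
    by (subst sum.reindex) (auto simp: tr_simps intro!: sum.cong)
  also have "\<dots> = (\<Sum>e\<in>{e\<in>A. fst e = x}. prob G x (snd e) * F (Inr e))"
    by (rule sum.inter_filter[OF finA, symmetric])
  also have "{e\<in>A. fst e = x} = Pair x ` {y\<in>verts G. (x,y) \<in> A}" using A ar by force
  also have "(\<Sum>e\<in>Pair x ` {y\<in>verts G. (x,y) \<in> A}. prob G x (snd e) * F (Inr e))
      = (\<Sum>y\<in>{y\<in>verts G. (x,y) \<in> A}. prob G x y * F (Inr (x,y)))"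
    by (subst sum.reindex) (auto simp: inj_on_def)
  also have "\<dots> = (\<Sum>y\<in>verts G. (if (x,y) \<in> A then prob G x y * F (Inr (x,y)) else 0))"
    by (rule sum.inter_filter[OF fin])
  also have "(\<Sum>y\<in>verts G. (if (x,y) \<in> arcs G \<and> (x,y) \<notin> A then prob G x y * F (Inl y) else 0))
      + (\<Sum>y\<in>verts G. (if (x,y) \<in> A then prob G x y * F (Inr (x,y)) else 0))
      = (\<Sum>y\<in>verts G. (if (x,y) \<in> arcs G then prob G x y else 0) * F (if (x,y) \<in> A then Inr (x,y) else Inl y))"
    unfolding sum.distrib[symmetric] by (rule sum.cong) (use A in auto)
  finally show ?thesis .
qed

lemma wfg_tr:
  assumes G: "ssg G" and A: "A \<subseteq> arcs G" and vm: "\<And>y. y \<in> verts G \<Longrightarrow> 0 \<le> val_max G \<sigma> y"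
  shows "wfg (transform G A \<sigma>)"
proof -
  let ?H = "transform G A \<sigma>"
  note D = ssgD[OF G]
  have wG: "wfg G" by (rule ssg_wfg[OF G])
  have finA: "finite A" using finite_subset[OF subset_trans[OF A D(2)]] D(1) by auto
  have f: "finite (verts ?H)" using D(1) finA by (simp add: tr_simps)
  have a: "arcs ?H \<subseteq> verts ?H \<times> verts ?H"
  proof
    fix p assume p: "p \<in> arcs ?H"
    obtain u v where uv: "p = (u,v)" by force
    show "p \<in> verts ?H \<times> verts ?H"
      using p D(2) A unfolding uv by (cases u; cases v) (auto simp: tr_simps)
  qed
  have m: "outn ?H u \<noteq> {}" if uv: "u \<in> verts ?H" "kind ?H u = MinV" for u
  proof -
    obtain x where x: "u = Inl x" "x \<in> verts G" "kind G x = MinV"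
      using uv by (cases u) (auto simp: tr_simps)
    obtain y where y: "(x,y) \<in> arcs G" using D(3)[OF x(2)] x(3) by (auto simp: outn_def)
    have "(if (x,y) \<in> A then Inr (x,y) else Inl y) \<in> outn ?H u"
      using y x by (auto simp: outn_def tr_simps)
    then show ?thesis by blast
  qed
  have r: "(\<forall>v\<in>verts ?H. (u,v) \<in> arcs ?H \<longrightarrow> 0 \<le> prob ?H u v) \<and>
        (\<Sum>v\<in>verts ?H. (if (u,v) \<in> arcs ?H then prob ?H u v else 0)) = 1"
    if uv: "u \<in> verts ?H" "kind ?H u = RandV" for u
  proof -
    obtain x where x: "u = Inl x" "x \<in> verts G" "kind G x = RandV"
      using uv by (cases u) (auto simp: tr_simps)
    have p: "0 \<le> prob G x y" if "(x,y) \<in> arcs G" for y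
      using wG x that D(2) unfolding wfg_def by blast
    have "\<forall>v\<in>verts ?H. (u,v) \<in> arcs ?H \<longrightarrow> 0 \<le> prob ?H u v"
    proof (intro ballI impI)
      fix v assume "v \<in> verts ?H" "(u,v) \<in> arcs ?H"
      then show "0 \<le> prob ?H u v" using p A x(1) by (cases v) (auto simp: tr_simps)
    qed
    moreover have "(\<Sum>v\<in>verts ?H. (if (u,v) \<in> arcs ?H then prob ?H u v else 0)) = 1"
    proof -
      have "(\<Sum>v\<in>verts ?H. (if (u,v) \<in> arcs ?H then prob ?H u v else 0))
          = (\<Sum>v\<in>verts ?H. (if (Inl x,v) \<in> arcs ?H then prob ?H (Inl x) v else 0) * (\<lambda>_. 1) v)"
        unfolding x(1) by simp
      also have "\<dots> = (\<Sum>y\<in>verts G. (if (x,y) \<in> arcs G then prob G x y else 0) * 1)"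
        by (rule tr_rand_sum[OF D(2) D(1) A])
      also have "\<dots> = 1" using wG x unfolding wfg_def by simp
      finally show ?thesis .
    qed
    ultimately show ?thesis by blast
  qed
  have s: "0 \<le> sval ?H u" if "u \<in> sinks ?H" for u
    using that D(6) vm A D(2) unfolding tr_sinks by (auto simp: tr_simps)
  show ?thesis unfolding wfg_def using f a m r s by blast
qed

lemma lift_vr:
  assumes "ssg G" "A \<subseteq> arcs G" "max_strategy G \<rho>"
  shows "\<forall>u\<in>verts (transform G A \<sigma>). kind (transform G A \<sigma>) u = MaxV \<longrightarrow> lift_strategy A \<rho> u \<in> verts (transform G A \<sigma>)"
proof (intro ballI impI)
  fix u assume u: "u \<in> verts (transform G A \<sigma>)" "kind (transform G A \<sigma>) u = MaxV"
  then obtain x where x: "u = Inl x" "x \<in> verts G" "kind G x = MaxV" by (cases u) (auto simp: tr_simps)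
  then have "(x, \<rho> x) \<in> arcs G" using assms(3) by (simp add: max_strategy_def)
  then have "\<rho> x \<in> verts G" using ssgD(2)[OF assms(1)] by auto
  then show "lift_strategy A \<rho> u \<in> verts (transform G A \<sigma>)" using x by (auto simp: lift_Inl tr_simps)
qed

lemma lift_min:
  assumes "min_strategy G \<tau>"
  shows "min_strategy (transform G A \<sigma>) (lift_strategy A \<tau>)"
  unfolding min_strategy_def
proof (intro ballI impI)
  fix u assume u: "u \<in> verts (transform G A \<sigma>)" "kind (transform G A \<sigma>) u = MinV"
  then obtain x where x: "u = Inl x" "x \<in> verts G" "kind G x = MinV" by (cases u) (auto simp: tr_simps)
  then have "(x, \<tau> x) \<in> arcs G" using assms by (simp add: min_strategy_def)
  then show "(u, lift_strategy A \<tau> u) \<in> arcs (transform G A \<sigma>)" using x by (auto simp: lift_Inl tr_simps)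
qed

lemma vm_le1:
  assumes G: "ssg G" and vr: "\<forall>x\<in>verts G. kind G x = MaxV \<longrightarrow> \<rho> x \<in> verts G" and x: "x \<in> verts G"
  shows "val_max G \<rho> x \<le> 1"
proof -
  have wf: "wfg G" by (rule ssg_wfg[OF G])
  have B: "vstrat G \<rho> (bresp G \<rho>)" "val_max G \<rho> = play_value G \<rho> (bresp G \<rho>)" using bresp[OF wf vr] by auto
  have "play_value G \<rho> (bresp G \<rho>) x \<le> (\<lambda>_. 1) x"
  proof (rule pv_super[OF wf B(1) _ _ _ x])
    show "(\<Sum>y\<in>verts G. trans G \<rho> (bresp G \<rho>) z y * 1) \<le> 1" if "z \<in> verts G" for z
      using rowsum[OF wf B(1) that] by simp
  qed (use ssgD(7)[OF G] in auto)
  then show ?thesis using B(2) by simp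
qed

context
  fixes G :: "'v game" and A :: "('v \<times> 'v) set" and \<sigma> :: "'v \<Rightarrow> 'v"
  assumes G: "ssg G" and A: "A \<subseteq> arcs G" and ms: "max_strategy G \<sigma>"
begin

lemma halfL1:
  assumes z: "z \<in> verts G"
  shows "val_max G \<sigma> z \<le> val_max (transform G A \<sigma>) (lift_strategy A \<sigma>) (Inl z)"
proof -
  define H where "H = transform G A \<sigma>"
  define s where "s = lift_strategy A \<sigma>"
  define vG where "vG = val_max G \<sigma>"
  define w where "w = val_max H s"
  note D = ssgD[OF G]
  have wG: "wfg G" by (rule ssg_wfg[OF G])
  have vr: "\<forall>x\<in>verts G. kind G x = MaxV \<longrightarrow> \<sigma> x \<in> verts G" by (rule max_vr[OF ms G])
  have vGnn: "0 \<le> vG y" if "y \<in> verts G" for y unfolding vG_def by (rule vm_nonneg[OF wG vr that])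
  have wH: "wfg H" unfolding H_def by (rule wfg_tr[OF G A]) (rule vGnn[unfolded vG_def])
  have vrH: "\<forall>u\<in>verts H. kind H u = MaxV \<longrightarrow> s u \<in> verts H" unfolding H_def s_def by (rule lift_vr[OF G A ms])
  define \<tau>w where "\<tau>w = bresp H s"
  have BH: "min_strategy H \<tau>w" "vstrat H s \<tau>w" "w = play_value H s \<tau>w"
    using bresp[OF wH vrH] by (auto simp: \<tau>w_def w_def)
  define \<tau>G where "\<tau>G = bresp G \<sigma>"
  have BG: "min_strategy G \<tau>G" "vstrat G \<sigma> \<tau>G" "vG = play_value G \<sigma> \<tau>G"
    using bresp[OF wG vr] by (auto simp: \<tau>G_def vG_def)
  have finG: "finite (verts G)" and finH: "finite (verts H)" using wG wH by (auto simp: wfg_def)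
  have Inl_v: "Inl y \<in> verts H" if "y \<in> verts G" for y using that by (simp add: H_def tr_simps)
  have wnn: "0 \<le> w u" if "u \<in> verts H" for u unfolding w_def by (rule vm_nonneg[OF wH vrH that])
  have w_Inr: "w (Inr e) = vG (snd e)" if "e \<in> A" for e
  proof -
    have "Inr e \<in> sinks H" using that by (simp add: H_def tr_sinks)
    then show ?thesis unfolding w_def using vm_sink[OF wH vrH] by (simp add: H_def tr_simps vG_def)
  qed
  have w_harm: "w u = (\<Sum>v\<in>verts H. trans H s \<tau>w u v * w v)" if "u \<in> verts H" for u
    using pv_harm[OF wH BH(2) that] BH(3) by simp
  have vG_harm: "vG y = (\<Sum>v\<in>verts G. trans G \<sigma> \<tau>G y v * vG v)" if "y \<in> verts G" for y
    using pv_harm[OF wG BG(2) that] BG(3) by simp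
  define \<pi> where "\<pi> u = (case u of Inl y \<Rightarrow> y | Inr e \<Rightarrow> snd e)" for u :: "'v + 'v \<times> 'v"
  define \<tau>p where "\<tau>p x = \<pi> (\<tau>w (Inl x))" for x
  have Fmin: "(x, \<tau>p x) \<in> arcs G \<and> w (\<tau>w (Inl x)) = (if (x, \<tau>p x) \<in> A then vG (\<tau>p x) else w (Inl (\<tau>p x)))"
    if x: "x \<in> verts G" "kind G x = MinV" for x
  proof -
    have a: "(Inl x, \<tau>w (Inl x)) \<in> arcs H"
      using BH(1) Inl_v[OF x(1)] x(2) by (simp add: min_strategy_def H_def tr_simps)
    show ?thesis
    proof (cases "\<tau>w (Inl x)")
      case (Inl y)
      then show ?thesis using a by (simp add: \<tau>p_def \<pi>_def H_def tr_simps)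
    next
      case (Inr e)
      then have e: "e \<in> A" "fst e = x" using a by (simp_all add: H_def tr_simps)
      then have "e = (x, snd e)" by (metis prod.collapse)
      then show ?thesis using Inr e w_Inr A by (auto simp: \<tau>p_def \<pi>_def)
    qed
  qed
  define g where "g y = min (vG y) (w (Inl y))" for y
  define \<tau>2 where "\<tau>2 x = (if w (Inl x) < vG x then \<tau>p x else \<tau>G x)" for x
  have ms2: "min_strategy G \<tau>2"
    unfolding min_strategy_def
  proof (intro ballI impI)
    fix x assume "x \<in> verts G" "kind G x = MinV"
    then show "(x, \<tau>2 x) \<in> arcs G" using Fmin BG(1) by (auto simp: \<tau>2_def min_strategy_def)
  qed
  have vs2: "vstrat G \<sigma> \<tau>2" by (rule min_vstrat[OF wG vr ms2])
  have main: "play_value G \<sigma> \<tau>2 z \<le> g z"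
  proof (rule pv_super[OF wG vs2 _ _ _ z])
    show "0 \<le> g y" if "y \<in> verts G" for y using vGnn[OF that] wnn[OF Inl_v[OF that]] by (simp add: g_def)
    show "sval G y \<le> g y" if "y \<in> sinks G" for y
    proof -
      have "vG y = sval G y" unfolding vG_def by (rule vm_sink[OF wG vr that])
      moreover have "Inl y \<in> sinks H" using that by (simp add: H_def tr_sinks)
      then have "w (Inl y) = sval G y" unfolding w_def using vm_sink[OF wH vrH] by (simp add: H_def tr_simps)
      ultimately show ?thesis by (simp add: g_def)
    qed
    fix x assume x: "x \<in> verts G"
    have Hk: "kind H (Inl x) = kind G x" by (simp add: H_def tr_simps)
    show "(\<Sum>y\<in>verts G. trans G \<sigma> \<tau>2 x y * g y) \<le> g x"
    proof (cases "kind G x")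
      case MaxV
      have sx: "\<sigma> x \<in> verts G" using vr x MaxV by blast
      have e1: "(\<Sum>y\<in>verts G. trans G \<sigma> \<tau>2 x y * g y) = g (\<sigma> x)" by (rule sum_trans_max[where \<rho>=\<sigma>, OF MaxV finG sx])
      have "vG x = vG (\<sigma> x)" using vG_harm[OF x] sum_trans_max[where \<rho>=\<sigma>, OF MaxV finG sx] by simp
      moreover have "w (Inl x) = w (s (Inl x))"
        using w_harm[OF Inl_v[OF x]] sum_trans_max[where K=H and x="Inl x" and \<rho>=s, OF _ finH] vrH Inl_v[OF x] MaxV Hk by simp
      moreover have "w (s (Inl x)) \<ge> g (\<sigma> x)"
        using w_Inr by (auto simp: s_def lift_Inl g_def)
      ultimately show ?thesis using e1 by (simp add: g_def)
    next
      case MinV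
      show ?thesis
      proof (cases "w (Inl x) < vG x")
        case True
        have "(x, \<tau>p x) \<in> arcs G" using Fmin[OF x MinV] by simp
        then have tv: "\<tau>p x \<in> verts G" using D(2) by auto
        have e1: "(\<Sum>y\<in>verts G. trans G \<sigma> \<tau>2 x y * g y) = g (\<tau>p x)"
          using sum_trans_min[where \<tau>=\<tau>2, OF MinV finG] tv True by (simp add: \<tau>2_def)
        have tw: "\<tau>w (Inl x) \<in> verts H" using BH(2) Inl_v[OF x] MinV Hk by (simp add: vstrat_def)
        have "w (Inl x) = w (\<tau>w (Inl x))"
          using w_harm[OF Inl_v[OF x]] sum_trans_min[where K=H and x="Inl x" and \<tau>=\<tau>w, OF _ finH tw] MinV Hk by simp
        also have "\<dots> \<ge> g (\<tau>p x)" using Fmin[OF x MinV] by (auto simp: g_def)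
        finally show ?thesis using e1 True by (simp add: g_def)
      next
        case False
        have tv: "\<tau>G x \<in> verts G" using BG(2) x MinV by (simp add: vstrat_def)
        have e1: "(\<Sum>y\<in>verts G. trans G \<sigma> \<tau>2 x y * g y) = g (\<tau>G x)"
          using sum_trans_min[where \<tau>=\<tau>2, OF MinV finG] tv False by (simp add: \<tau>2_def)
        have "vG x = vG (\<tau>G x)" using vG_harm[OF x] sum_trans_min[where \<tau>=\<tau>G, OF MinV finG tv] by simp
        then show ?thesis using e1 False by (simp add: g_def)
      qed
    next
      case RandV
      define c where "c y = (if (x,y) \<in> arcs G then prob G x y else 0)" for y
      have cnn: "0 \<le> c y" if "y \<in> verts G" for y using wG x RandV that unfolding c_def wfg_def by auto
      have e1: "(\<Sum>y\<in>verts G. trans G \<sigma> \<tau>2 x y * g y) = (\<Sum>y\<in>verts G. c y * g y)"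
        by (simp add: trans_rand[OF RandV] c_def)
      have "(\<Sum>y\<in>verts G. c y * g y) \<le> (\<Sum>y\<in>verts G. c y * vG y)"
        by (intro sum_mono mult_left_mono cnn) (auto simp: g_def)
      also have "\<dots> = vG x" using vG_harm[OF x] by (simp add: trans_rand[OF RandV] c_def)
      finally have le1: "(\<Sum>y\<in>verts G. c y * g y) \<le> vG x" .
      have "(\<Sum>y\<in>verts G. c y * g y) \<le> (\<Sum>y\<in>verts G. c y * w (if (x,y) \<in> A then Inr (x,y) else Inl y))"
        by (intro sum_mono mult_left_mono cnn) (auto simp: g_def w_Inr)
      also have "\<dots> = (\<Sum>v\<in>verts H. (if (Inl x, v) \<in> arcs H then prob H (Inl x) v else 0) * w v)"
        unfolding c_def H_def by (rule tr_rand_sum[OF D(2) D(1) A, symmetric])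
      also have "\<dots> = w (Inl x)"
        using w_harm[OF Inl_v[OF x]] RandV Hk by (simp add: trans_rand)
      finally have le2: "(\<Sum>y\<in>verts G. c y * g y) \<le> w (Inl x)" .
      show ?thesis using e1 le1 le2 by (simp add: g_def)
    next
      case SinkV
      show ?thesis using sum_trans_sink[OF SinkV finG x] by simp
    qed
  qed
  have "vG z \<le> play_value G \<sigma> \<tau>2 z" unfolding vG_def by (rule vm_le[OF wG vr ms2 z])
  then show ?thesis using main by (simp add: g_def vG_def w_def H_def s_def)
qed

end

lemma claimC:
  fixes G :: "'v game"
  assumes G: "ssg G" and A: "A \<subseteq> arcs G" and ms: "max_strategy G \<sigma>" and ms': "max_strategy G \<sigma>'"
    and M0: "0 \<le> M" and MW: "\<And>z. z \<in> trap G \<sigma>' \<Longrightarrow> val_max G \<sigma> z \<le> M"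
    and x: "x \<in> trap G \<sigma>'"
  shows "val_max (transform G A \<sigma>) (lift_strategy A \<sigma>') (Inl x) \<le> M"
proof -
  define H where "H = transform G A \<sigma>"
  define s' where "s' = lift_strategy A \<sigma>'"
  define vG where "vG = val_max G \<sigma>"
  define W where "W = trap G \<sigma>'"
  define \<tau>' where "\<tau>' = trapstr G \<sigma>'"
  define t' where "t' = lift_strategy A \<tau>'"
  note D = ssgD[OF G]
  have wG: "wfg G" by (rule ssg_wfg[OF G])
  have vr: "\<forall>x\<in>verts G. kind G x = MaxV \<longrightarrow> \<sigma> x \<in> verts G" by (rule max_vr[OF ms G])
  have vGnn: "0 \<le> vG y" if "y \<in> verts G" for y unfolding vG_def by (rule vm_nonneg[OF wG vr that])
  have vG1: "vG y \<le> 1" if "y \<in> verts G" for y unfolding vG_def by (rule vm_le1[OF G vr that])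
  have wH: "wfg H" unfolding H_def by (rule wfg_tr[OF G A]) (rule vGnn[unfolded vG_def])
  have vrH: "\<forall>u\<in>verts H. kind H u = MaxV \<longrightarrow> s' u \<in> verts H" unfolding H_def s'_def by (rule lift_vr[OF G A ms'])
  have mst': "min_strategy G \<tau>'" unfolding \<tau>'_def by (rule trapstr(1)[OF G])
  have mt': "min_strategy H t'" unfolding H_def t'_def by (rule lift_min[OF mst'])
  have vst': "vstrat H s' t'" by (rule min_vstrat[OF wH vrH mt'])
  have pW: "post G \<sigma>' W" unfolding W_def by (rule post_trap)
  have Wsub: "W \<subseteq> verts G - sinks G" using pW by (simp add: post_def)
  have xv: "x \<in> verts G" using x Wsub W_def by auto
  have Inl_v: "Inl y \<in> verts H" if "y \<in> verts G" for y using that by (simp add: H_def tr_simps)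
  define C where "C = max 1 M"
  define f :: "'v + 'v \<times> 'v \<Rightarrow> real" where "f u = (case u of Inl y \<Rightarrow> if y \<in> W then M else C | Inr e \<Rightarrow> vG (snd e))" for u
  have Asnd: "snd e \<in> verts G" if "e \<in> A" for e using that A D(2) by auto
  have fC: "f u \<le> C" if "u \<in> verts H" for u
  proof (cases u)
    case (Inr e)
    then have "e \<in> A" using that by (auto simp: H_def tr_simps)
    then have "vG (snd e) \<le> 1" using vG1 Asnd by blast
    then show ?thesis using Inr by (simp add: f_def C_def)
  qed (auto simp: f_def C_def)
  have "play_value H s' t' (Inl x) \<le> f (Inl x)"
  proof (rule pv_super[OF wH vst' _ _ _ Inl_v[OF xv]])
    show "0 \<le> f u" if "u \<in> verts H" for u
      using that vGnn Asnd M0 by (auto simp: f_def C_def H_def tr_simps split: sum.split)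
    show "sval H u \<le> f u" if "u \<in> sinks H" for u
    proof -
      from that have "u \<in> Inl ` sinks G \<union> Inr ` A" by (simp add: H_def tr_sinks)
      then show ?thesis
      proof
        assume "u \<in> Inl ` sinks G"
        then obtain y where y: "u = Inl y" "y \<in> sinks G" by blast
        then have "y \<notin> W" using Wsub by auto
        then show ?thesis using y D(7)[OF y(2)] by (simp add: f_def C_def H_def tr_simps)
      next
        assume "u \<in> Inr ` A"
        then obtain e where "u = Inr e" by blast
        then show ?thesis by (simp add: f_def H_def tr_simps vG_def)
      qed
    qed
    fix u assume u: "u \<in> verts H"
    show "(\<Sum>v\<in>verts H. trans H s' t' u v * f v) \<le> f u"
    proof (cases u)
      case (Inr e)
      have "kind H u = SinkV" using Inr by (simp add: H_def tr_simps)
      then show ?thesis using sum_trans_sink[where K=H and x=u, OF _ _ u] wH by (simp add: wfg_def)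
    next
      case (Inl y)
      have yv: "y \<in> verts G" using u Inl by (auto simp: H_def tr_simps)
      have Hk: "kind H (Inl y) = kind G y" by (simp add: H_def tr_simps)
      show ?thesis
      proof (cases "y \<in> W")
        case False
        have "(\<Sum>v\<in>verts H. trans H s' t' u v * f v) \<le> C"
          by (rule sum_trans_le[OF wH vst' u]) (rule fC)
        then show ?thesis using False Inl by (simp add: f_def)
      next
        case True
        have succ: "f v \<le> M" if v: "v \<in> verts H" "trans H s' t' (Inl y) v \<noteq> 0" for v
        proof (cases "kind G y")
          case MaxV
          have "v = s' (Inl y)" using v MaxV Hk by (simp add: trans_max split: if_splits)
          moreover have "\<sigma>' y \<in> W" using pW True MaxV by (simp add: post_def)
          ultimately show ?thesis using MW[folded W_def vG_def] by (auto simp: s'_def lift_Inl f_def)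
        next
          case MinV
          have "v = t' (Inl y)" using v MinV Hk by (simp add: trans_min split: if_splits)
          moreover have "\<tau>' y \<in> W" using trapstr(2)[OF G] True MinV by (simp add: \<tau>'_def W_def)
          ultimately show ?thesis using MW[folded W_def vG_def] by (auto simp: t'_def lift_Inl f_def)
        next
          case RandV
          have a: "(Inl y, v) \<in> arcs H" using v RandV Hk by (simp add: trans_rand split: if_splits)
          show ?thesis
          proof (cases v)
            case (Inl z)
            then have "(y,z) \<in> arcs G" using a by (simp add: H_def tr_simps)
            then have "z \<in> W" using pW True RandV by (simp add: post_def)
            then show ?thesis using Inl by (simp add: f_def)
          next
            case (Inr e)
            then have "e \<in> A" "fst e = y" using a by (simp_all add: H_def tr_simps)
            then have "(y, snd e) \<in> arcs G" using A by (metis prod.collapse subsetD)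
            then have "snd e \<in> W" using pW True RandV by (simp add: post_def)
            then show ?thesis using Inr MW[folded W_def vG_def] by (simp add: f_def)
          qed
        next
          case SinkV
          then show ?thesis using True Wsub yv by (auto simp: sinks_def)
        qed
        have "(\<Sum>v\<in>verts H. trans H s' t' u v * f v) \<le> M"
          by (rule sum_trans_le[OF wH vst' u]) (use succ Inl in auto)
        then show ?thesis using True Inl by (simp add: f_def)
      qed
    qed
  qed
  moreover have "val_max H s' (Inl x) \<le> play_value H s' t' (Inl x)" by (rule vm_le[OF wH vrH mt' Inl_v[OF xv]])
  ultimately show ?thesis using x by (simp add: f_def W_def H_def s'_def)
qed

theorem proposition21:
  fixes G :: "'v game" and A :: "('v \<times> 'v) set" and \<sigma> \<sigma>' :: "'v \<Rightarrow> 'v"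
  assumes "ssg G"
    and "A \<subseteq> arcs G"
    and "max_strategy G \<sigma>"
    and "max_strategy G \<sigma>'"
    and "improves (transform G A \<sigma>) (Inl ` verts G) (lift_strategy A \<sigma>') (lift_strategy A \<sigma>)"
  shows "Zmax G \<sigma>' \<subseteq> Zmax G \<sigma>"
proof -
  note G = assms(1) and A = assms(2) and ms = assms(3) and ms' = assms(4) and imp = assms(5)
  define H where "H = transform G A \<sigma>"
  define vG where "vG = val_max G \<sigma>"
  define W where "W = trap G \<sigma>'"
  define \<tau>' where "\<tau>' = trapstr G \<sigma>'"
  define u where "u = val_max H (lift_strategy A \<sigma>')"
  define w where "w = val_max H (lift_strategy A \<sigma>)"
  note D = ssgD[OF G]
  have wG: "wfg G" by (rule ssg_wfg[OF G])
  have vr: "\<forall>x\<in>verts G. kind G x = MaxV \<longrightarrow> \<sigma> x \<in> verts G" by (rule max_vr[OF ms G])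
  have finG: "finite (verts G)" by (rule D(1))
  have vGnn: "0 \<le> vG y" if "y \<in> verts G" for y unfolding vG_def by (rule vm_nonneg[OF wG vr that])
  have pW: "post G \<sigma>' W" unfolding W_def by (rule post_trap)
  have Wsub: "W \<subseteq> verts G - sinks G" using pW by (simp add: post_def)
  have mst': "min_strategy G \<tau>'" unfolding \<tau>'_def by (rule trapstr(1)[OF G])
  have vst': "vstrat G \<sigma> \<tau>'" by (rule min_vstrat[OF wG vr mst'])
  have imp1: "w (Inl x) \<le> u (Inl x)" if "x \<in> verts G" for x
    using imp that by (simp add: improves_def u_def w_def H_def)
  have imp3: "\<sigma>' x = \<sigma> x" if "x \<in> verts G" "kind G x = MaxV" "u (Inl x) = w (Inl x)" for x
  proof -
    have "lift_strategy A \<sigma>' (Inl x) = lift_strategy A \<sigma> (Inl x)"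
      using imp that by (simp add: improves_def u_def w_def H_def tr_simps)
    then show ?thesis by (auto simp: lift_Inl split: if_splits)
  qed
  have K4: "\<sigma>' x = \<sigma> x" if x: "x \<in> W" "kind G x = MaxV" and M0: "0 \<le> M"
    and MW: "\<And>z. z \<in> W \<Longrightarrow> vG z \<le> M" and xM: "vG x = M" for x M
  proof -
    have xv: "x \<in> verts G" using x Wsub by auto
    have "u (Inl x) \<le> M" unfolding u_def H_def
      by (rule claimC[OF G A ms ms' M0 MW[unfolded W_def vG_def] x(1)[unfolded W_def]]) 
    moreover have "vG x \<le> w (Inl x)" unfolding vG_def w_def H_def by (rule halfL1[OF G A ms xv])
    ultimately have "u (Inl x) = w (Inl x)" using imp1[OF xv] xM by simp
    then show ?thesis by (rule imp3[OF xv x(2)])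
  qed
  have allz: "vG x = 0" if "x \<in> W" for x
  proof -
    have neW: "W \<noteq> {}" using that by blast
    have finW: "finite W" by (rule finite_subset[OF _ finG]) (use Wsub in blast)
    define M where "M = Max (vG ` W)"
    have MW: "vG z \<le> M" if "z \<in> W" for z unfolding M_def by (rule Max_ge) (use finW that in auto)
    have Min: "M \<in> vG ` W" unfolding M_def by (rule Max_in) (use finW neW in auto)
    then obtain z0 where z0: "z0 \<in> W" "vG z0 = M" by blast
    have z0v: "z0 \<in> verts G" using z0(1) Wsub by blast
    have M0: "0 \<le> M" using vGnn[OF z0v] z0(2) by simp
    define E where "E = {z\<in>W. vG z = M}"
    have clE: "clsd G \<sigma> \<tau>' E"
      unfolding clsd_def
    proof (intro conjI ballI impI)
      show "E \<subseteq> verts G - sinks G" using Wsub by (auto simp: E_def)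
      fix z y assume z: "z \<in> E" and y: "y \<in> verts G" and t: "trans G \<sigma> \<tau>' z y \<noteq> 0"
      have zW: "z \<in> W" and zM: "vG z = M" using z by (auto simp: E_def)
      have zv: "z \<in> verts G" using zW Wsub by auto
      show "y \<in> E"
      proof (cases "kind G z")
        case MaxV
        have yz: "y = \<sigma> z" using t MaxV by (simp add: trans_max split: if_splits)
        have "\<sigma>' z = \<sigma> z" by (rule K4[OF zW MaxV M0 MW zM])
        moreover have "\<sigma>' z \<in> W" using pW zW MaxV unfolding post_def by blast
        ultimately have "y \<in> W" using yz by simp
        moreover have "vG y = vG z"
          using vm_harm[OF wG vr zv] sum_trans_max[where \<rho>=\<sigma>, OF MaxV finG] vr zv MaxV yz
          by (simp add: vG_def)
        ultimately show ?thesis using zM by (simp add: E_def)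
      next
        case MinV
        have yz: "y = \<tau>' z" using t MinV by (simp add: trans_min split: if_splits)
        have "y \<in> W \<and> (z, y) \<in> arcs G" using trapstr(2)[OF G] zW MinV yz by (simp add: \<tau>'_def W_def)
        moreover then have "vG z \<le> vG y" unfolding vG_def using vm_min[OF wG vr zv MinV] by blast
        ultimately show ?thesis using zM MW[of y] by (simp add: E_def)
      next
        case RandV
        have a: "(z,y) \<in> arcs G" using t RandV by (simp add: trans_rand split: if_splits)
        then have yW: "y \<in> W" using pW zW RandV by (simp add: post_def)
        define \<tau>G where "\<tau>G = bresp G \<sigma>"
        have vsG: "vstrat G \<sigma> \<tau>G" using bresp(3)[OF wG vr] by (simp add: \<tau>G_def)
        have tt: "trans G \<sigma> \<tau>G z = trans G \<sigma> \<tau>' z" by (rule trans_cong[OF zv]) (simp add: RandV)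
        have "vG y = M"
        proof (rule sum_trans_eq[OF wG vsG zv, where F=vG])
          show "vG v \<le> M" if "v \<in> verts G" "trans G \<sigma> \<tau>G z v \<noteq> 0" for v
          proof -
            have "(z,v) \<in> arcs G" using that RandV by (simp add: trans_rand split: if_splits)
            then have "v \<in> W" using pW zW RandV by (simp add: post_def)
            then show ?thesis by (rule MW)
          qed
          show "(\<Sum>v\<in>verts G. trans G \<sigma> \<tau>G z v * vG v) = M"
            using vm_harm[OF wG vr zv] zM by (simp add: vG_def \<tau>G_def)
          show "y \<in> verts G" by (rule y)
          show "trans G \<sigma> \<tau>G z y \<noteq> 0" using t tt by simp
        qed
        then show ?thesis using yW by (simp add: E_def)
      next
        case SinkV
        then show ?thesis using zv zW Wsub by (auto simp: sinks_def)
      qed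
    qed
    have clE1: "E \<subseteq> verts G - sinks G" and clE2: "\<And>x y. x \<in> E \<Longrightarrow> y \<in> verts G \<Longrightarrow> trans G \<sigma> \<tau>' x y \<noteq> 0 \<Longrightarrow> y \<in> E"
      using clE unfolding clsd_def by blast+
    have z0E: "z0 \<in> E" using z0 by (simp add: E_def)
    have "play_value G \<sigma> \<tau>' z0 = 0"
      by (rule pv_closed_zero[OF wG vst' clE1 clE2 z0E])
    moreover have "vG z0 \<le> play_value G \<sigma> \<tau>' z0" unfolding vG_def
      by (rule vm_le[OF wG vr mst' z0v])
    ultimately have "M = 0" using z0(2) M0 by simp
    moreover have "x \<in> verts G" using that Wsub by blast
    ultimately show ?thesis using MW[OF that] vGnn[of x] by simp
  qed
  have sw: "\<sigma> x \<in> W" if "x \<in> W" "kind G x = MaxV" for x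
  proof -
    have "\<sigma>' x = \<sigma> x"
      by (rule K4[OF that order_refl]) (use allz that in auto)
    then show ?thesis using pW that by (auto simp: post_def)
  qed
  have "post G \<sigma> W" using pW sw unfolding post_def by blast
  then have "W \<subseteq> trap G \<sigma>" by (rule post_sub_trap)
  then show ?thesis using Zmax_trap[OF G ms] Zmax_trap[OF G ms'] by (simp add: W_def)
qed

end
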